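(* Let $U$ be a Galois algebra over $\Gamma$ in $\mathcal{K}=(L*\mathfrak{M})^G$ with $\mathfrak{M}\cong\mathbb{Z}^n$. Then $GK\,U\geq GK\,\Gamma+n$.
   Context: $\mathsf{k}$ is an algebraically closed field of characteristic zero. Galois algebra setup: $\Gamma\subset U$ where $\Gamma$ is a finitely generated commutative $\mathsf{k}$-domain and $U$ is an associative algebra finitely generated over $\Gamma$; $K$ is the field of fractions of $\Gamma$; $L$ is a finite Galois extension of $K$ with Galois group $G$; $\mathfrak{M}\subset\operatorname{Aut}_{\mathsf{k}}L$ is a monoid with the separating property (if $m,m'\in\mathfrak{M}$ have the same restriction to $K$ then $m=m'$), and $G$ acts on $\mathfrak{M}$ by conjugation, hence on the skew monoid ring $L*\mathfrak{M}$. $U$ is a Galois algebra over $\Gamma$ if there is an embedding $U\hookrightarrow\mathcal{K}:=(L*\mathfrak{M})^G$ with $KU=UK=\mathcal{K}$. $GK$ is Gelfand–Kirillov dimension: $GK\,A=\sup_V\limsup_m\log(\dim V^m)/\log m$ over finite-dimensional subspaces $V\ni1$. *)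

theory Defs
  imports Complex_Main "HOL-Computational_Algebra.Polynomial"
    "HOL-Library.Extended_Real" "HOL-Library.Liminf_Limsup"
begin

text \<open>Everything lives inside the field L, represented by a type 'L.
  The base field k, the domain Gamma and its fraction field K are subsets of 'L.\<close>

definition is_subfield :: "'a::field set \<Rightarrow> bool" where
  "is_subfield F \<longleftrightarrow> 0 \<in> F \<and> 1 \<in> F \<and> (\<forall>x\<in>F. \<forall>y\<in>F. x + y \<in> F \<and> x - y \<in> F \<and> x * y \<in> F)
     \<and> (\<forall>x\<in>F. x \<noteq> 0 \<longrightarrow> inverse x \<in> F)"

definition alg_closed_subfield :: "'a::field set \<Rightarrow> bool" where
  "alg_closed_subfield F \<longleftrightarrow> is_subfield F \<and>
     (\<forall>p::'a poly. (\<forall>i. coeff p i \<in> F) \<and> degree p > 0 \<longrightarrow> (\<exists>x\<in>F. poly p x = 0))"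

definition is_subring :: "'a::field set \<Rightarrow> bool" where
  "is_subring R \<longleftrightarrow> 0 \<in> R \<and> 1 \<in> R \<and> (\<forall>x\<in>R. \<forall>y\<in>R. x + y \<in> R \<and> x - y \<in> R \<and> x * y \<in> R)"

text \<open>Subring (= k-subalgebra once it contains k) generated by a set.\<close>
definition ring_gen :: "'a::field set \<Rightarrow> 'a set" where
  "ring_gen A = \<Inter>{R. is_subring R \<and> A \<subseteq> R}"

definition fg_k_domain :: "'a::field set \<Rightarrow> 'a set \<Rightarrow> bool" where
  "fg_k_domain k \<Gamma> \<longleftrightarrow> k \<subseteq> \<Gamma> \<and> (\<exists>S. finite S \<and> S \<subseteq> \<Gamma> \<and> \<Gamma> = ring_gen (k \<union> S))"

definition frac_field :: "'a::field set \<Rightarrow> 'a set" where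
  "frac_field \<Gamma> = {a / b | a b. a \<in> \<Gamma> \<and> b \<in> \<Gamma> \<and> b \<noteq> 0}"

definition fspan :: "'a::field set \<Rightarrow> 'a set \<Rightarrow> 'a set" where
  "fspan F S = {(\<Sum>s\<in>T. c s * s) | T c. finite T \<and> T \<subseteq> S \<and> c ` T \<subseteq> F}"

definition field_aut :: "('a::field \<Rightarrow> 'a) \<Rightarrow> bool" where
  "field_aut \<sigma> \<longleftrightarrow> bij \<sigma> \<and> (\<forall>x y. \<sigma> (x + y) = \<sigma> x + \<sigma> y) \<and> (\<forall>x y. \<sigma> (x * y) = \<sigma> x * \<sigma> y)"

definition Aut_over :: "'a::field set \<Rightarrow> ('a \<Rightarrow> 'a) set" where
  "Aut_over F = {\<sigma>. field_aut \<sigma> \<and> (\<forall>x\<in>F. \<sigma> x = x)}"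

definition finite_galois_over :: "'a::field set \<Rightarrow> bool" where
  "finite_galois_over K \<longleftrightarrow> is_subfield K \<and> (\<exists>B. finite B \<and> fspan K B = UNIV)
     \<and> {x. \<forall>\<sigma>\<in>Aut_over K. \<sigma> x = x} = K"

text \<open>The monoid M is isomorphic to Z^n (Z^n represented as integer sequences
  supported in {..<n}).\<close>
definition Zn :: "nat \<Rightarrow> (nat \<Rightarrow> int) set" where
  "Zn n = {z. \<forall>i\<ge>n. z i = 0}"

definition monoid_iso_Zn :: "('a \<Rightarrow> 'a) set \<Rightarrow> nat \<Rightarrow> bool" where
  "monoid_iso_Zn M n \<longleftrightarrow> (\<exists>\<phi>. bij_betw \<phi> (Zn n) M \<and>
      (\<forall>a\<in>Zn n. \<forall>b\<in>Zn n. \<phi> (\<lambda>i. a i + b i) = \<phi> a \<circ> \<phi> b))"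

text \<open>Skew monoid ring L*M: elements are finitely supported functions M \<rightarrow> L,
  x = sum_m x(m) m.\<close>
type_synonym 'a skew = "('a \<Rightarrow> 'a) \<Rightarrow> 'a"

definition ssupp :: "'a::field skew \<Rightarrow> ('a \<Rightarrow> 'a) set" where
  "ssupp x = {m. x m \<noteq> 0}"

definition skew_carrier :: "('a::field \<Rightarrow> 'a) set \<Rightarrow> 'a skew set" where
  "skew_carrier M = {x. finite (ssupp x) \<and> ssupp x \<subseteq> M}"

text \<open>(a m)(b m') = a m(b) (m m').\<close>
definition skew_mult :: "'a::field skew \<Rightarrow> 'a skew \<Rightarrow> 'a skew" where
  "skew_mult x y = (\<lambda>p. \<Sum>(m, m')\<in>{(m, m'). m \<in> ssupp x \<and> m' \<in> ssupp y \<and> m \<circ> m' = p}.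
                          x m * m (y m'))"

definition skew_add :: "'a::field skew \<Rightarrow> 'a skew \<Rightarrow> 'a skew" where
  "skew_add x y = (\<lambda>p. x p + y p)"

definition skew_neg :: "'a::field skew \<Rightarrow> 'a skew" where
  "skew_neg x = (\<lambda>p. - x p)"

definition skew_zero :: "'a::field skew" where
  "skew_zero = (\<lambda>p. 0)"

definition iota :: "'a::field \<Rightarrow> 'a skew" where
  "iota l = (\<lambda>p. if p = id then l else 0)"

definition skew_one :: "'a::field skew" where
  "skew_one = iota 1"

text \<open>Action of g in G on L*M: g(sum l_m m) = sum g(l_m) (g m g^-1).\<close>
definition skew_act :: "('a::field \<Rightarrow> 'a) \<Rightarrow> 'a skew \<Rightarrow> 'a skew" where
  "skew_act g x = (\<lambda>p. g (x (inv g \<circ> p \<circ> g)))"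

definition skew_invariants :: "('a::field \<Rightarrow> 'a) set \<Rightarrow> ('a \<Rightarrow> 'a) set \<Rightarrow> 'a skew set" where
  "skew_invariants M G = {x \<in> skew_carrier M. \<forall>g\<in>G. skew_act g x = x}"

definition skew_subring :: "'a::field skew set \<Rightarrow> bool" where
  "skew_subring R \<longleftrightarrow> skew_zero \<in> R \<and> skew_one \<in> R \<and>
     (\<forall>x\<in>R. \<forall>y\<in>R. skew_add x y \<in> R \<and> skew_mult x y \<in> R) \<and> (\<forall>x\<in>R. skew_neg x \<in> R)"

definition skew_ring_gen :: "'a::field skew set \<Rightarrow> 'a skew set" where
  "skew_ring_gen A = \<Inter>{R. skew_subring R \<and> A \<subseteq> R}"

definition skew_sum :: "('b \<Rightarrow> 'a::field skew) \<Rightarrow> 'b set \<Rightarrow> 'a skew" where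
  "skew_sum f T = (\<lambda>p. \<Sum>t\<in>T. f t p)"

definition left_span :: "'a::field set \<Rightarrow> 'a skew set \<Rightarrow> 'a skew set" where
  "left_span K U = {skew_sum (\<lambda>u. skew_mult (iota (c u)) u) T | T c. finite T \<and> T \<subseteq> U \<and> c ` T \<subseteq> K}"

definition right_span :: "'a::field set \<Rightarrow> 'a skew set \<Rightarrow> 'a skew set" where
  "right_span K U = {skew_sum (\<lambda>u. skew_mult u (iota (c u))) T | T c. finite T \<and> T \<subseteq> U \<and> c ` T \<subseteq> K}"

definition kspan :: "'a::field set \<Rightarrow> 'a skew set \<Rightarrow> 'a skew set" where
  "kspan k S = {skew_sum (\<lambda>s p. c s * s p) T | T c. finite T \<and> T \<subseteq> S \<and> c ` T \<subseteq> k}"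

definition kdim :: "'a::field set \<Rightarrow> 'a skew set \<Rightarrow> nat" where
  "kdim k V = (LEAST d. \<exists>S. finite S \<and> card S = d \<and> kspan k S = V)"

definition set_prod :: "'a::field skew set \<Rightarrow> 'a skew set \<Rightarrow> 'a skew set" where
  "set_prod A B = {skew_mult a b | a b. a \<in> A \<and> b \<in> B}"

text \<open>Products of m elements of V; V^m is the k-span of these.\<close>
primrec vprods :: "'a::field skew set \<Rightarrow> nat \<Rightarrow> 'a skew set" where
  "vprods V 0 = {skew_one}"
| "vprods V (Suc m) = set_prod (vprods V m) V"

definition GKdim :: "'a::field set \<Rightarrow> 'a skew set \<Rightarrow> ereal" where
  "GKdim k A = (SUP V \<in> {V. (\<exists>S. finite S \<and> S \<subseteq> A \<and> V = kspan k S) \<and> skew_one \<in> V}.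
      limsup (\<lambda>m. ereal (ln (real (kdim k (kspan k (vprods V m)))) / ln (real m))))"

end

theory Submission
  imports Defs "HOL-Library.FuncSet"
begin

definition lspan :: "'a::field set \<Rightarrow> ('c \<Rightarrow> 'a) set \<Rightarrow> ('c \<Rightarrow> 'a) set" where
  "lspan F S = {(\<lambda>p. \<Sum>s\<in>T. c s * s p) | T c. finite T \<and> T \<subseteq> S \<and> c ` T \<subseteq> F}"

lemma subfield_0: "is_subfield F \<Longrightarrow> 0 \<in> F" by (simp add: is_subfield_def)
lemma subfield_1: "is_subfield F \<Longrightarrow> 1 \<in> F" by (simp add: is_subfield_def)
lemma subfield_add: "is_subfield F \<Longrightarrow> x \<in> F \<Longrightarrow> y \<in> F \<Longrightarrow> x + y \<in> F" by (simp add: is_subfield_def)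
lemma subfield_diff: "is_subfield F \<Longrightarrow> x \<in> F \<Longrightarrow> y \<in> F \<Longrightarrow> x - y \<in> F" by (simp add: is_subfield_def)
lemma subfield_mult: "is_subfield F \<Longrightarrow> x \<in> F \<Longrightarrow> y \<in> F \<Longrightarrow> x * y \<in> F" by (simp add: is_subfield_def)
lemma subfield_inverse: "is_subfield F \<Longrightarrow> x \<in> F \<Longrightarrow> inverse x \<in> F"
  by (cases "x = 0") (auto simp: is_subfield_def)
lemma subfield_divide: "is_subfield F \<Longrightarrow> x \<in> F \<Longrightarrow> y \<in> F \<Longrightarrow> x / y \<in> F"
  by (simp add: divide_inverse subfield_mult subfield_inverse)
lemma subfield_uminus: "is_subfield F \<Longrightarrow> x \<in> F \<Longrightarrow> - x \<in> F"
  using subfield_diff[of F 0 x] subfield_0[of F] by simp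
lemma subfield_sum: "is_subfield F \<Longrightarrow> (\<And>i. i \<in> I \<Longrightarrow> f i \<in> F) \<Longrightarrow> sum f I \<in> F"
  by (induction I rule: infinite_finite_induct) (auto simp: subfield_0 subfield_add)

lemma lspan_finite_iff:
  assumes "finite B" and that: "0 \<in> F"
  shows "x \<in> lspan F B \<longleftrightarrow> (\<exists>c. (\<forall>s\<in>B. c s \<in> F) \<and> x = (\<lambda>p. \<Sum>s\<in>B. c s * s p))"
proof
  assume "x \<in> lspan F B"
  then obtain T c where T: "finite T" "T \<subseteq> B" "c ` T \<subseteq> F" and x: "x = (\<lambda>p. \<Sum>s\<in>T. c s * s p)"
    unfolding lspan_def by blast
  define c' where "c' s = (if s \<in> T then c s else 0)" for s
  have "(\<Sum>s\<in>B. c' s * s p) = (\<Sum>s\<in>T. c s * s p)" for p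
    using assms T by (intro sum.mono_neutral_cong_right) (auto simp: c'_def)
  then show "\<exists>c. (\<forall>s\<in>B. c s \<in> F) \<and> x = (\<lambda>p. \<Sum>s\<in>B. c s * s p)"
    using T that by (intro exI[of _ c']) (auto simp: c'_def x)
next
  assume "\<exists>c. (\<forall>s\<in>B. c s \<in> F) \<and> x = (\<lambda>p. \<Sum>s\<in>B. c s * s p)"
  then show "x \<in> lspan F B" using assms unfolding lspan_def by blast
qed

lemma lspan_indexed:
  assumes F: "is_subfield F" and I: "finite I" and f: "\<And>i. i \<in> I \<Longrightarrow> f i \<in> S"
    and c: "\<And>i. i \<in> I \<Longrightarrow> c i \<in> F"
  shows "(\<lambda>p. \<Sum>i\<in>I. c i * f i p) \<in> lspan F S"
proof -
  define c' where "c' x = (\<Sum>i\<in>{i\<in>I. f i = x}. c i)" for x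
  have "(\<Sum>x\<in>f ` I. c' x * x p) = (\<Sum>i\<in>I. c i * f i p)" for p
  proof -
    have "(\<Sum>x\<in>f ` I. c' x * x p) = (\<Sum>x\<in>f ` I. \<Sum>i\<in>{i\<in>I. f i = x}. c i * f i p)"
      by (auto simp: c'_def sum_distrib_right intro!: sum.cong)
    also have "\<dots> = (\<Sum>i\<in>I. c i * f i p)"
      using I by (rule sum.image_gen[symmetric])
    finally show ?thesis .
  qed
  moreover have "c' ` f ` I \<subseteq> F" using c F by (auto simp: c'_def intro!: subfield_sum)
  ultimately show ?thesis unfolding lspan_def using I f
    by (intro CollectI exI[of _ "f ` I"] exI[of _ c']) auto
qed

lemma lspan_sub: "is_subfield F \<Longrightarrow> S \<subseteq> lspan F S"
proof
  fix x assume "is_subfield F" "x \<in> S"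
  then have "(\<lambda>p. \<Sum>i\<in>{x}. 1 * x p) \<in> lspan F S"
    by (intro lspan_indexed) (auto simp: subfield_1)
  then show "x \<in> lspan F S" by simp
qed

lemma lspan_mono: "A \<subseteq> B \<Longrightarrow> lspan F A \<subseteq> lspan F B"
  unfolding lspan_def by blast

lemma lspan_trans:
  assumes F: "is_subfield F" and AB: "A \<subseteq> lspan F B"
  shows "lspan F A \<subseteq> lspan F B"
proof
  fix x assume "x \<in> lspan F A"
  then obtain T c where T: "finite T" "T \<subseteq> A" "c ` T \<subseteq> F" and x: "x = (\<lambda>p. \<Sum>s\<in>T. c s * s p)"
    unfolding lspan_def by blast
  have "\<forall>a\<in>T. \<exists>TD. finite (fst TD) \<and> fst TD \<subseteq> B \<and> snd TD ` fst TD \<subseteq> F \<and> a = (\<lambda>p. \<Sum>s\<in>fst TD. snd TD s * s p)"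
  proof
    fix a assume "a \<in> T"
    then have "a \<in> lspan F B" using T AB by auto
    then obtain T' d where "finite T'" "T' \<subseteq> B" "d ` T' \<subseteq> F" "a = (\<lambda>p. \<Sum>s\<in>T'. d s * s p)"
      unfolding lspan_def by blast
    then show "\<exists>TD. finite (fst TD) \<and> fst TD \<subseteq> B \<and> snd TD ` fst TD \<subseteq> F \<and> a = (\<lambda>p. \<Sum>s\<in>fst TD. snd TD s * s p)"
      by (intro exI[of _ "(T', d)"]) auto
  qed
  from bchoice[OF this] obtain TD where TD0: "\<forall>a\<in>T. finite (fst (TD a)) \<and> fst (TD a) \<subseteq> B \<and> snd (TD a) ` fst (TD a) \<subseteq> F \<and> a = (\<lambda>p. \<Sum>s\<in>fst (TD a). snd (TD a) s * s p)"
    by blast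
  then have TD: "\<And>a. a \<in> T \<Longrightarrow> finite (fst (TD a)) \<and> fst (TD a) \<subseteq> B \<and> snd (TD a) ` fst (TD a) \<subseteq> F \<and> a = (\<lambda>p. \<Sum>s\<in>fst (TD a). snd (TD a) s * s p)"
    by blast
  have TDB: "\<And>a b. a \<in> T \<Longrightarrow> b \<in> fst (TD a) \<Longrightarrow> b \<in> B" using TD by blast
  have TDF: "\<And>a b. a \<in> T \<Longrightarrow> b \<in> fst (TD a) \<Longrightarrow> snd (TD a) b \<in> F" using TD by blast
  define I where "I = Sigma T (\<lambda>a. fst (TD a))"
  have I: "finite I" unfolding I_def using T TD by auto
  have "(\<lambda>p. \<Sum>i\<in>I. (c (fst i) * snd (TD (fst i)) (snd i)) * (snd i) p) \<in> lspan F B"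
    using I T TDB TDF F unfolding I_def
    by (intro lspan_indexed) (auto intro!: subfield_mult)
  moreover have "(\<Sum>i\<in>I. (c (fst i) * snd (TD (fst i)) (snd i)) * (snd i) p) = x p" for p
  proof -
    have "(\<Sum>i\<in>I. (c (fst i) * snd (TD (fst i)) (snd i)) * (snd i) p)
        = (\<Sum>a\<in>T. \<Sum>s\<in>fst (TD a). c a * snd (TD a) s * s p)"
      unfolding I_def using T TD by (subst sum.Sigma) (auto simp: split_beta)
    also have "\<dots> = (\<Sum>a\<in>T. c a * a p)"
    proof (rule sum.cong[OF refl])
      fix a assume a: "a \<in> T"
      have "c a * a p = c a * (\<Sum>s\<in>fst (TD a). snd (TD a) s * s p)"
        using TD[OF a] by (metis (no_types, lifting))
      then show "(\<Sum>s\<in>fst (TD a). c a * snd (TD a) s * s p) = c a * a p"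
        by (simp add: sum_distrib_left mult.assoc)
    qed
    finally show ?thesis using x by simp
  qed
  ultimately show "x \<in> lspan F B" by (metis (no_types, lifting) ext)
qed

lemma dep_lemma:
  fixes v :: "'i \<Rightarrow> 'c \<Rightarrow> 'a::field"
  assumes F: "is_subfield F" and B: "finite B"
  shows "finite I \<Longrightarrow> card B < card I \<Longrightarrow> (\<forall>i\<in>I. v i \<in> lspan F B) \<Longrightarrow>
    \<exists>c. (\<forall>i\<in>I. c i \<in> F) \<and> (\<exists>i\<in>I. c i \<noteq> 0) \<and> (\<forall>p. (\<Sum>i\<in>I. c i * v i p) = 0)"
  using B
proof (induction B arbitrary: I v rule: finite_induct)
  case empty
  then obtain i0 where i0: "i0 \<in> I" by fastforce
  have "v i0 \<in> lspan F {}" using empty i0 by auto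
  then have v0: "v i0 = (\<lambda>p. 0)" using lspan_finite_iff[of "{}" F] subfield_0[OF F] by auto
  define c :: "'i \<Rightarrow> 'a" where "c i = (if i = i0 then 1 else 0)" for i
  have "(\<Sum>i\<in>I. c i * v i p) = 0" for p
    using empty(1) i0 v0 by (auto simp: c_def intro!: sum.neutral)
  then show ?case using i0 F by (intro exI[of _ c]) (auto simp: c_def subfield_0 subfield_1)
next
  case (insert b B' I v)
  have F0: "0 \<in> F" using F by (rule subfield_0)
  have "\<forall>i\<in>I. \<exists>c. (\<forall>s\<in>insert b B'. c s \<in> F) \<and> v i = (\<lambda>p. \<Sum>s\<in>insert b B'. c s * s p)"
    using insert.prems(3) lspan_finite_iff[OF _ F0] insert.hyps(1) by blast
  then obtain C where C: "\<And>i. i \<in> I \<Longrightarrow> (\<forall>s\<in>insert b B'. C i s \<in> F) \<and> v i = (\<lambda>p. \<Sum>s\<in>insert b B'. C i s * s p)"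
    by metis
  define w where "w i = (\<lambda>p. \<Sum>s\<in>B'. C i s * s p)" for i
  have vw: "v i p = C i b * b p + w i p" if "i \<in> I" for i p
    using C[OF that] insert.hyps by (simp add: w_def)
  have wB: "w i \<in> lspan F B'" if "i \<in> I" for i
    using C[OF that] insert.hyps(1) lspan_finite_iff[OF insert.hyps(1) F0] unfolding w_def by blast
  show ?case
  proof (cases "\<forall>i\<in>I. C i b = 0")
    case True
    then have "\<forall>i\<in>I. v i \<in> lspan F B'"
      using vw wB by (metis (no_types, lifting) add_0 ext mult_zero_left)
    moreover have "card B' < card I" using insert by simp
    ultimately show ?thesis using insert.IH insert.prems(1) by blast
  next
    case False
    then obtain i0 where i0: "i0 \<in> I" "C i0 b \<noteq> 0" by blast
    define \<alpha> where "\<alpha> i = C i b" for i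
    define I' where "I' = I - {i0}"
    define v' where "v' i = (\<lambda>p. v i p - (\<alpha> i / \<alpha> i0) * v i0 p)" for i
    have fI': "finite I'" using insert.prems(1) by (simp add: I'_def)
    have cI': "card B' < card I'" using insert i0 by (simp add: I'_def)
    have "v' i \<in> lspan F B'" if "i \<in> I'" for i
    proof -
      have iI: "i \<in> I" using that by (simp add: I'_def)
      have "v' i = (\<lambda>p. \<Sum>s\<in>B'. (C i s - (\<alpha> i / \<alpha> i0) * C i0 s) * s p)"
      proof
        fix p
        have r: "(\<alpha> i / \<alpha> i0) * \<alpha> i0 = \<alpha> i" using i0(2) by (simp add: \<alpha>_def)
        have "v' i p = w i p - (\<alpha> i / \<alpha> i0) * w i0 p"
          unfolding v'_def vw[OF iI] vw[OF i0(1)] \<alpha>_def[symmetric]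
          using i0(2) by (simp add: algebra_simps r \<alpha>_def)
        also have "\<dots> = (\<Sum>s\<in>B'. (C i s - (\<alpha> i / \<alpha> i0) * C i0 s) * s p)"
          by (simp add: w_def sum_subtractf sum_distrib_left algebra_simps)
        finally show "v' i p = (\<Sum>s\<in>B'. (C i s - (\<alpha> i / \<alpha> i0) * C i0 s) * s p)" .
      qed
      moreover have "\<forall>s\<in>B'. C i s - (\<alpha> i / \<alpha> i0) * C i0 s \<in> F"
        using C[OF iI] C[OF i0(1)] F unfolding \<alpha>_def
        by (auto intro!: subfield_diff subfield_mult subfield_divide)
      ultimately show ?thesis
        by (subst lspan_finite_iff[OF insert.hyps(1) F0]) (rule exI[of _ "\<lambda>s. C i s - (\<alpha> i / \<alpha> i0) * C i0 s"], simp)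
    qed
    then obtain d where d: "\<forall>i\<in>I'. d i \<in> F" "\<exists>i\<in>I'. d i \<noteq> 0" "\<forall>p. (\<Sum>i\<in>I'. d i * v' i p) = 0"
      using insert.IH[OF fI' cI'] by blast
    define c where "c i = (if i = i0 then - (\<Sum>j\<in>I'. d j * (\<alpha> j / \<alpha> i0)) else d i)" for i
    have "(\<Sum>i\<in>I. c i * v i p) = 0" for p
    proof -
      have II: "I = insert i0 I'" using i0 by (auto simp: I'_def)
      have i0I': "i0 \<notin> I'" by (simp add: I'_def)
      have "(\<Sum>i\<in>I. c i * v i p) = c i0 * v i0 p + (\<Sum>i\<in>I'. c i * v i p)"
        unfolding II using fI' i0I' by (rule sum.insert)
      also have "(\<Sum>i\<in>I'. c i * v i p) = (\<Sum>i\<in>I'. d i * v i p)"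
        using i0I' by (intro sum.cong) (auto simp: c_def)
      finally have "(\<Sum>i\<in>I. c i * v i p) = c i0 * v i0 p + (\<Sum>i\<in>I'. d i * v i p)" .
      also have "\<dots> = (\<Sum>i\<in>I'. d i * v' i p)"
        unfolding v'_def c_def
        by (simp add: right_diff_distrib sum_subtractf sum_distrib_right mult.assoc)
      finally show ?thesis using d(3) by simp
    qed
    moreover have "\<forall>i\<in>I. c i \<in> F"
      using d(1) C i0 F unfolding c_def \<alpha>_def
      by (auto intro!: subfield_uminus subfield_sum subfield_mult subfield_divide simp: I'_def)
    moreover have "\<exists>i\<in>I. c i \<noteq> 0" using d(2) by (auto simp: c_def I'_def)
    ultimately show ?thesis by blast
  qed
qed

lemma kspan_eq: "kspan k S = lspan k S"
  unfolding kspan_def lspan_def skew_sum_def by simp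

definition indep :: "'a::field set \<Rightarrow> 'i set \<Rightarrow> ('i \<Rightarrow> 'c \<Rightarrow> 'a) \<Rightarrow> bool" where
  "indep F I f \<longleftrightarrow> (\<forall>c. (\<forall>i\<in>I. c i \<in> F) \<and> (\<forall>p. (\<Sum>i\<in>I. c i * f i p) = 0) \<longrightarrow> (\<forall>i\<in>I. c i = 0))"

lemma kdim_exists:
  assumes "finite S0" "W = kspan k S0"
  shows "\<exists>S. finite S \<and> card S = kdim k W \<and> kspan k S = W"
  unfolding kdim_def by (rule LeastI[of _ "card S0"]) (use assms in auto)

lemma kdim_ge:
  assumes F: "is_subfield k" and S0: "finite S0" "W = kspan k S0" and I: "finite I"
    and f: "\<forall>i\<in>I. f i \<in> W" and ind: "indep k I f"
  shows "card I \<le> kdim k W"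
proof (rule ccontr)
  assume "\<not> card I \<le> kdim k W"
  moreover obtain S where S: "finite S" "card S = kdim k W" "kspan k S = W"
    using kdim_exists[OF S0] by blast
  ultimately have "card S < card I" by simp
  moreover have "\<forall>i\<in>I. f i \<in> lspan k S" using f S by (simp add: kspan_eq)
  ultimately obtain c where "(\<forall>i\<in>I. c i \<in> k)" "(\<exists>i\<in>I. c i \<noteq> 0)" "(\<forall>p. (\<Sum>i\<in>I. c i * f i p) = 0)"
    using dep_lemma[OF F S(1) I] by blast
  then show False using ind unfolding indep_def by blast
qed

lemma kdim_basis:
  assumes F: "is_subfield k" and S0: "finite S0" "W = kspan k S0"
  shows "\<exists>S. finite S \<and> card S = kdim k W \<and> kspan k S = W \<and> S \<subseteq> W \<and> indep k S (\<lambda>s. s)"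
proof -
  obtain S where S: "finite S" "card S = kdim k W" "kspan k S = W"
    using kdim_exists[OF S0] by blast
  have sub: "S \<subseteq> W" using S lspan_sub[OF F] by (auto simp: kspan_eq)
  have "indep k S (\<lambda>s. s)"
    unfolding indep_def
  proof (intro allI impI ballI, rule ccontr)
    fix c s0
    assume c: "(\<forall>i\<in>S. c i \<in> k) \<and> (\<forall>p. (\<Sum>i\<in>S. c i * i p) = 0)" and s0: "s0 \<in> S" "c s0 \<noteq> 0"
    define S' where "S' = S - {s0}"
    have fS': "finite S'" using S by (simp add: S'_def)
    have "s0 = (\<lambda>p. \<Sum>s\<in>S'. (- c s / c s0) * s p)"
    proof
      fix p
      have "0 = (\<Sum>i\<in>S. c i * i p)" using c by simp
      also have "\<dots> = c s0 * s0 p + (\<Sum>i\<in>S'. c i * i p)"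
        unfolding S'_def using S(1) s0(1) by (simp add: sum.remove)
      finally have "c s0 * s0 p = - (\<Sum>i\<in>S'. c i * i p)" by (simp add: eq_neg_iff_add_eq_0 add.commute)
      then have "s0 p = - (\<Sum>i\<in>S'. c i * i p) / c s0" using s0(2) by (simp add: field_simps)
      then show "s0 p = (\<Sum>s\<in>S'. (- c s / c s0) * s p)"
        by (simp add: sum_divide_distrib sum_negf)
    qed
    moreover have "(\<lambda>p. \<Sum>s\<in>S'. (- c s / c s0) * s p) \<in> lspan k S'"
      using fS' c F s0(1) by (intro lspan_indexed) (auto simp: S'_def intro!: subfield_divide subfield_uminus)
    ultimately have "s0 \<in> lspan k S'" by simp
    then have "S \<subseteq> lspan k S'" using lspan_sub[OF F, of S'] s0 by (auto simp: S'_def)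
    then have "lspan k S \<subseteq> lspan k S'" using lspan_trans[OF F] by blast
    moreover have "lspan k S' \<subseteq> lspan k S" by (rule lspan_mono) (auto simp: S'_def)
    ultimately have "kspan k S' = W" using S by (simp add: kspan_eq)
    moreover have "card S' < kdim k W" using card_Diff1_less[OF S(1) s0(1)] S(2) by (simp add: S'_def)
    ultimately show False
      unfolding kdim_def using fS' by (metis (mono_tags, lifting) not_less_Least)
  qed
  then show ?thesis using S sub by blast
qed

lemma kdim_mono:
  assumes F: "is_subfield k" and "finite S1" "W1 = kspan k S1" "finite S2" "W2 = kspan k S2" "W1 \<subseteq> W2"
  shows "kdim k W1 \<le> kdim k W2"
proof -
  obtain S where S: "finite S" "card S = kdim k W1" "kspan k S = W1" "S \<subseteq> W1" "indep k S (\<lambda>s. s)"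
    using kdim_basis[OF F assms(2,3)] by blast
  show ?thesis using kdim_ge[OF F assms(4,5) S(1), of "\<lambda>s. s"] S assms(6) by auto
qed

lemma kdim_pos:
  assumes F: "is_subfield k" and "finite S0" "W = kspan k S0" "x \<in> W" "x p \<noteq> 0"
  shows "1 \<le> kdim k W"
proof -
  have "indep k {x} (\<lambda>s. s)" unfolding indep_def using assms(5) by auto
  then show ?thesis using kdim_ge[OF F assms(2,3), of "{x}" "\<lambda>s. s"] assms(4) by auto
qed

lemma aut_0: "field_aut s \<Longrightarrow> s 0 = 0"
  unfolding field_aut_def by (metis add_cancel_right_right)
lemma aut_add: "field_aut s \<Longrightarrow> s (x + y) = s x + s y" unfolding field_aut_def by blast
lemma aut_mult: "field_aut s \<Longrightarrow> s (x * y) = s x * s y" unfolding field_aut_def by blast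
lemma aut_bij: "field_aut s \<Longrightarrow> bij s" unfolding field_aut_def by blast
lemma aut_inj: "field_aut s \<Longrightarrow> inj s" unfolding field_aut_def bij_def by blast
lemma aut_1: "field_aut s \<Longrightarrow> s 1 = 1"
proof -
  assume a: "field_aut s"
  then obtain x where x: "s x = 1" using aut_bij bij_pointE by metis
  have "s 1 * s x = s x" using aut_mult[OF a, of 1 x] by simp
  then show ?thesis using x by simp
qed
lemma aut_sum: "field_aut s \<Longrightarrow> s (sum f A) = (\<Sum>a\<in>A. s (f a))"
  by (induction A rule: infinite_finite_induct) (auto simp: aut_0 aut_add)
lemma aut_power: "field_aut s \<Longrightarrow> s (x ^ n) = s x ^ n"
  by (induction n) (auto simp: aut_1 aut_mult)
lemma aut_uminus: "field_aut s \<Longrightarrow> s (- x) = - s x"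
proof -
  assume a: "field_aut s"
  have "s x + s (- x) = 0" using aut_add[OF a, of x "- x"] aut_0[OF a] by simp
  then show ?thesis by (metis minus_unique)
qed
lemma aut_diff: "field_aut s \<Longrightarrow> s (x - y) = s x - s y"
  using aut_add[of s x "- y"] aut_uminus[of s y] by simp
lemma aut_nonzero: "field_aut s \<Longrightarrow> x \<noteq> 0 \<Longrightarrow> s x \<noteq> 0"
  using aut_inj[of s] aut_0[of s] by (metis injD)

lemma alg_element:
  fixes b :: "'a::field"
  assumes K: "is_subfield K" and B: "finite B" "fspan K B = UNIV"
  shows "\<exists>c. (\<forall>i. c i \<in> K) \<and> (\<exists>i\<le>card B. c i \<noteq> 0) \<and> (\<Sum>i\<le>card B. c i * b ^ i) = 0"
proof -
  define B' where "B' = (\<lambda>s (_::unit). s) ` B"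
  define v where "v i = (\<lambda>_::unit. b ^ i)" for i :: nat
  have "v i \<in> lspan K B'" for i
  proof -
    have "b ^ i \<in> fspan K B" using B by simp
    then obtain T c where T: "finite T" "T \<subseteq> B" "c ` T \<subseteq> K" "b ^ i = (\<Sum>s\<in>T. c s * s)"
      unfolding fspan_def by blast
    have "(\<lambda>p. \<Sum>s\<in>T. c s * (\<lambda>s (_::unit). s) s p) \<in> lspan K B'"
      using T K by (intro lspan_indexed) (auto simp: B'_def)
    then show ?thesis using T by (simp add: v_def)
  qed
  moreover have "card B' < card {..card B}"
    using B card_image_le[of B "\<lambda>s (_::unit). s"] by (simp add: B'_def le_imp_less_Suc)
  ultimately obtain c where c: "\<forall>i\<in>{..card B}. c i \<in> K" "\<exists>i\<in>{..card B}. c i \<noteq> 0"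
    "\<forall>p. (\<Sum>i\<in>{..card B}. c i * v i p) = 0"
    using dep_lemma[OF K _ finite_atMost, of B' "card B" v] B by (auto simp: B'_def)
  define c' where "c' i = (if i \<le> card B then c i else 0)" for i
  have "\<forall>i. c' i \<in> K" using c(1) subfield_0[OF K] by (simp add: c'_def)
  moreover have "\<exists>i\<le>card B. c' i \<noteq> 0" using c(2) by (auto simp: c'_def)
  moreover have "(\<Sum>i\<le>card B. c' i * b ^ i) = 0" using c(3) by (simp add: c'_def v_def)
  ultimately show ?thesis by blast
qed

lemma aut_finite:
  fixes K :: "'a::field set"
  assumes G: "finite_galois_over K"
  shows "finite (Aut_over K)"
proof -
  have K: "is_subfield K" using G by (simp add: finite_galois_over_def)
  obtain B where B: "finite B" "fspan K B = UNIV" using G unfolding finite_galois_over_def by blast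
  have "\<forall>b. \<exists>c. (\<forall>i. c i \<in> K) \<and> (\<exists>i\<le>card B. c i \<noteq> 0) \<and> (\<Sum>i\<le>card B. c i * b ^ i) = 0"
    using alg_element[OF K B] by blast
  then obtain C where C: "\<And>b. (\<forall>i. C b i \<in> K) \<and> (\<exists>i\<le>card B. C b i \<noteq> 0) \<and> (\<Sum>i\<le>card B. C b i * b ^ i) = 0"
    by metis
  define P where "P b = (\<Sum>i\<le>card B. monom (C b i) i)" for b
  have polyP: "poly (P b) y = (\<Sum>i\<le>card B. C b i * y ^ i)" for b y
    by (simp add: P_def poly_sum poly_monom)
  have P0: "P b \<noteq> 0" for b
  proof -
    obtain i where i: "i \<le> card B" "C b i \<noteq> 0" using C by blast
    have "coeff (P b) i = (\<Sum>j\<le>card B. if j = i then C b j else 0)"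
      by (simp add: P_def coeff_sum coeff_monom)
    also have "\<dots> = C b i" using i by (simp add: sum.delta)
    finally show ?thesis using i by auto
  qed
  define R where "R b = {y. poly (P b) y = 0}" for b
  have finR: "finite (R b)" for b using P0[of b] poly_roots_finite[of "P b"] by (simp add: R_def)
  have inR: "s b \<in> R b" if "s \<in> Aut_over K" for s b
  proof -
    have a: "field_aut s" and fx: "\<forall>x\<in>K. s x = x" using that by (auto simp: Aut_over_def)
    have "poly (P b) (s b) = (\<Sum>i\<le>card B. C b i * s b ^ i)" by (rule polyP)
    also have "\<dots> = (\<Sum>i\<le>card B. s (C b i * b ^ i))"
      using C fx by (simp add: aut_mult[OF a] aut_power[OF a])
    also have "\<dots> = s (\<Sum>i\<le>card B. C b i * b ^ i)" by (simp add: aut_sum[OF a])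
    also have "\<dots> = 0" using C aut_0[OF a] by simp
    finally show ?thesis by (simp add: R_def)
  qed
  have inj: "inj_on (\<lambda>s. restrict s B) (Aut_over K)"
  proof (rule inj_onI)
    fix s t assume s: "s \<in> Aut_over K" and t: "t \<in> Aut_over K" and eq: "restrict s B = restrict t B"
    have as: "field_aut s" and fs: "\<forall>x\<in>K. s x = x" using s by (auto simp: Aut_over_def)
    have at: "field_aut t" and ft: "\<forall>x\<in>K. t x = x" using t by (auto simp: Aut_over_def)
    show "s = t"
    proof
      fix x
      have "x \<in> fspan K B" using B by simp
      then obtain T c where T: "finite T" "T \<subseteq> B" "c ` T \<subseteq> K" "x = (\<Sum>s\<in>T. c s * s)"
        unfolding fspan_def by blast
      have eqB: "\<And>b. b \<in> B \<Longrightarrow> s b = t b" using eq by (metis restrict_apply)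
      have "s x = (\<Sum>b\<in>T. c b * s b)" using T fs by (simp add: aut_sum[OF as] aut_mult[OF as] subset_eq)
      also have "\<dots> = (\<Sum>b\<in>T. c b * t b)" using T eqB by (intro sum.cong) auto
      also have "\<dots> = t x" using T ft by (simp add: aut_sum[OF at] aut_mult[OF at] subset_eq)
      finally show "s x = t x" .
    qed
  qed
  have "(\<lambda>s. restrict s B) ` Aut_over K \<subseteq> PiE B R" using inR by (auto simp: restrict_PiE_iff)
  moreover have "finite (PiE B R)" using B finR by (intro finite_PiE) auto
  ultimately show ?thesis using inj inj_on_finite by blast
qed

datatype lexz = LZ "nat \<Rightarrow> int"

instantiation lexz :: linorder
begin
fun less_lexz :: "lexz \<Rightarrow> lexz \<Rightarrow> bool" where
  "less_lexz (LZ a) (LZ b) \<longleftrightarrow> (\<exists>i. a i < b i \<and> (\<forall>j<i. a j = b j))"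
definition less_eq_lexz :: "lexz \<Rightarrow> lexz \<Rightarrow> bool" where
  "less_eq_lexz x y \<longleftrightarrow> x < y \<or> x = y"

lemma lexz_irrefl: "\<not> (x::lexz) < x"
  by (cases x) auto

lemma lexz_trans: "(x::lexz) < y \<Longrightarrow> y < z \<Longrightarrow> x < z"
proof (cases x, cases y, cases z)
  fix a b c assume xyz: "x = LZ a" "y = LZ b" "z = LZ c" and "x < y" "y < z"
  then obtain i j where i: "a i < b i" "\<forall>l<i. a l = b l" and j: "b j < c j" "\<forall>l<j. b l = c l" by auto
  show "x < z"
  proof (cases i j rule: linorder_cases)
    case less then show ?thesis using i j xyz by (auto intro!: exI[of _ i])
  next
    case equal then show ?thesis using i j xyz by (auto intro!: exI[of _ i])
  next
    case greater then show ?thesis using i j xyz by (auto intro!: exI[of _ j])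
  qed
qed

lemma lexz_total: "(x::lexz) < y \<or> x = y \<or> y < x"
proof (cases x, cases y)
  fix a b assume xy: "x = LZ a" "y = LZ b"
  show ?thesis
  proof (cases "a = b")
    case True then show ?thesis using xy by simp
  next
    case False
    then have ex: "\<exists>i. a i \<noteq> b i" by auto
    define i where "i = (LEAST i. a i \<noteq> b i)"
    have ne: "a i \<noteq> b i" unfolding i_def by (rule LeastI_ex[OF ex])
    have eq: "\<forall>j<i. a j = b j" unfolding i_def using not_less_Least by blast
    show ?thesis
    proof (cases "a i < b i")
      case True then show ?thesis using eq xy by auto
    next
      case False then have "b i < a i" using ne by simp
      then show ?thesis using eq xy by (auto intro!: exI[of _ i])
    qed
  qed
qed

instance
proof
  fix x y z :: lexz
  show "(x < y) = (x \<le> y \<and> \<not> y \<le> x)"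
    unfolding less_eq_lexz_def using lexz_irrefl[of x] lexz_trans[of x y x] by blast
  show "x \<le> x" unfolding less_eq_lexz_def by simp
  show "x \<le> y \<Longrightarrow> y \<le> z \<Longrightarrow> x \<le> z" unfolding less_eq_lexz_def using lexz_trans by blast
  show "x \<le> y \<Longrightarrow> y \<le> x \<Longrightarrow> x = y" unfolding less_eq_lexz_def using lexz_irrefl lexz_trans by blast
  show "x \<le> y \<or> y \<le> x" unfolding less_eq_lexz_def using lexz_total by blast
qed
end

definition vadd :: "(nat \<Rightarrow> int) \<Rightarrow> (nat \<Rightarrow> int) \<Rightarrow> (nat \<Rightarrow> int)" where
  "vadd a b = (\<lambda>i. a i + b i)"

lemma lexz_add_less: "LZ a < LZ b \<Longrightarrow> LZ (vadd a c) < LZ (vadd b c)"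
  by (auto simp: vadd_def)

lemma lexz_add_le: "LZ a \<le> LZ b \<Longrightarrow> LZ (vadd a c) \<le> LZ (vadd b c)"
proof -
  assume "LZ a \<le> LZ b"
  then have "LZ a < LZ b \<or> a = b" unfolding less_eq_lexz_def by simp
  then show ?thesis
  proof
    assume "LZ a < LZ b" then have "LZ (vadd a c) < LZ (vadd b c)" by (rule lexz_add_less)
    then show ?thesis by (rule less_imp_le)
  qed simp
qed

lemma vadd_comm: "vadd a b = vadd b a" by (auto simp: vadd_def)

lemma Zn_vadd: "a \<in> Zn n \<Longrightarrow> b \<in> Zn n \<Longrightarrow> vadd a b \<in> Zn n"
  by (auto simp: Zn_def vadd_def)

lemma skew_mult_gen:
  assumes A: "finite A" and B: "finite B" and sx: "ssupp x \<subseteq> A" and sy: "ssupp y \<subseteq> B"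
    and A0: "\<forall>m\<in>A. m 0 = 0"
  shows "skew_mult x y p = (\<Sum>m\<in>A. \<Sum>m'\<in>B. if m \<circ> m' = p then x m * m (y m') else 0)"
proof -
  have "skew_mult x y p = (\<Sum>(m, m')\<in>{(m, m'). m \<in> A \<and> m' \<in> B \<and> m \<circ> m' = p}. x m * m (y m'))"
    unfolding skew_mult_def
  proof (rule sum.mono_neutral_left)
    show "finite {(m, m'). m \<in> A \<and> m' \<in> B \<and> m \<circ> m' = p}"
      by (rule finite_subset[of _ "A \<times> B"]) (use A B in auto)
    show "{(m, m'). m \<in> ssupp x \<and> m' \<in> ssupp y \<and> m \<circ> m' = p} \<subseteq> {(m, m'). m \<in> A \<and> m' \<in> B \<and> m \<circ> m' = p}"
      using sx sy by auto
    show "\<forall>i\<in>{(m, m'). m \<in> A \<and> m' \<in> B \<and> m \<circ> m' = p} - {(m, m'). m \<in> ssupp x \<and> m' \<in> ssupp y \<and> m \<circ> m' = p}.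
       (case i of (m, m') \<Rightarrow> x m * m (y m')) = 0"
      using A0 by (auto simp: ssupp_def)
  qed
  also have "\<dots> = (\<Sum>z\<in>{z \<in> A \<times> B. fst z \<circ> snd z = p}. x (fst z) * fst z (y (snd z)))"
    by (rule sum.cong) (auto simp: split_beta)
  also have "\<dots> = (\<Sum>z\<in>A \<times> B. if fst z \<circ> snd z = p then x (fst z) * fst z (y (snd z)) else 0)"
    using A B by (intro sum.inter_filter) auto
  also have "\<dots> = (\<Sum>(m, m')\<in>A \<times> B. if m \<circ> m' = p then x m * m (y m') else 0)"
    by (simp add: split_beta)
  also have "\<dots> = (\<Sum>m\<in>A. \<Sum>m'\<in>B. if m \<circ> m' = p then x m * m (y m') else 0)"
    by (subst sum.cartesian_product[symmetric]) (simp add: split_beta)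
  finally show ?thesis .
qed

lemma ssupp_iota: "ssupp (iota a) = (if a = 0 then {} else {id})"
  by (auto simp: ssupp_def iota_def)

lemma iota_mult: "skew_mult (iota a) x = (\<lambda>p. a * x p)"
proof
  fix p
  show "skew_mult (iota a) x p = a * x p"
  proof (cases "a = 0")
    case True then show ?thesis by (simp add: skew_mult_def ssupp_iota)
  next
    case False
    show ?thesis
    proof (cases "p \<in> ssupp x")
      case True
      then have "{(m, m'). m \<in> ssupp (iota a) \<and> m' \<in> ssupp x \<and> m \<circ> m' = p} = {(id, p)}"
        using False by (auto simp: ssupp_iota)
      then show ?thesis using False by (simp add: skew_mult_def iota_def)
    next
      case nt: False
      have E: "{(m, m'). m \<in> ssupp (iota a) \<and> m' \<in> ssupp x \<and> m \<circ> m' = p} = {}"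
        using False nt by (auto simp: ssupp_iota)
      show ?thesis unfolding skew_mult_def E using nt by (simp add: ssupp_def)
    qed
  qed
qed

lemma iota_iota: "skew_mult (iota a) (iota b) = iota (a * b)"
  unfolding iota_mult by (auto simp: iota_def)

lemma skew_sum_apply: "skew_sum f T p = (\<Sum>t\<in>T. f t p)"
  by (simp add: skew_sum_def)

locale skewM =
  fixes k :: "'L::field set" and M :: "('L \<Rightarrow> 'L) set" and n :: nat
    and \<phi> :: "(nat \<Rightarrow> int) \<Rightarrow> ('L \<Rightarrow> 'L)"
  assumes M_sub: "M \<subseteq> Aut_over k" and M_id: "id \<in> M" and M_comp: "\<forall>m\<in>M. \<forall>m'\<in>M. m \<circ> m' \<in> M"
    and \<phi>_bij: "bij_betw \<phi> (Zn n) M"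
    and \<phi>_hom: "\<forall>a\<in>Zn n. \<forall>b\<in>Zn n. \<phi> (\<lambda>i. a i + b i) = \<phi> a \<circ> \<phi> b"
begin

lemma M_aut: "m \<in> M \<Longrightarrow> field_aut m"
  using M_sub by (auto simp: Aut_over_def)

lemma M_fix: "m \<in> M \<Longrightarrow> c \<in> k \<Longrightarrow> m c = c"
  using M_sub by (auto simp: Aut_over_def)

lemma M_0: "m \<in> M \<Longrightarrow> m 0 = 0" using M_aut aut_0 by blast

lemma carrier_finite: "x \<in> skew_carrier M \<Longrightarrow> finite (ssupp x)"
  by (simp add: skew_carrier_def)
lemma carrier_sub: "x \<in> skew_carrier M \<Longrightarrow> ssupp x \<subseteq> M"
  by (simp add: skew_carrier_def)

lemma mult_carrier:
  assumes x: "x \<in> skew_carrier M" and y: "y \<in> skew_carrier M"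
  shows "skew_mult x y \<in> skew_carrier M"
proof -
  have "ssupp (skew_mult x y) \<subseteq> (\<lambda>(m, m'). m \<circ> m') ` (ssupp x \<times> ssupp y)"
  proof
    fix p assume p: "p \<in> ssupp (skew_mult x y)"
    show "p \<in> (\<lambda>(m, m'). m \<circ> m') ` (ssupp x \<times> ssupp y)"
    proof (rule ccontr)
      assume "p \<notin> (\<lambda>(m, m'). m \<circ> m') ` (ssupp x \<times> ssupp y)"
      then have E: "{(m, m'). m \<in> ssupp x \<and> m' \<in> ssupp y \<and> m \<circ> m' = p} = {}" by auto
      have "skew_mult x y p = 0" unfolding skew_mult_def E by simp
      then show False using p by (simp add: ssupp_def)
    qed
  qed
  moreover have "(\<lambda>(m, m'). m \<circ> m') ` (ssupp x \<times> ssupp y) \<subseteq> M"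
    using carrier_sub[OF x] carrier_sub[OF y] M_comp by auto
  moreover have "finite ((\<lambda>(m, m'). m \<circ> m') ` (ssupp x \<times> ssupp y))"
    using carrier_finite[OF x] carrier_finite[OF y] by auto
  ultimately show ?thesis unfolding skew_carrier_def using finite_subset by blast
qed

lemma comb_carrier:
  assumes "finite I" "\<And>i. i \<in> I \<Longrightarrow> x i \<in> skew_carrier M"
  shows "(\<lambda>p. \<Sum>i\<in>I. c i * x i p) \<in> skew_carrier M"
proof -
  have "ssupp (\<lambda>p. \<Sum>i\<in>I. c i * x i p) \<subseteq> (\<Union>i\<in>I. ssupp (x i))"
    by (auto simp: ssupp_def intro: ccontr[where P = "_ = 0"]
        dest!: sum.neutral[where A = I and g = "\<lambda>i. c i * x i _"] |
        force simp: ssupp_def intro!: sum.neutral)+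
  moreover have "finite (\<Union>i\<in>I. ssupp (x i))" using assms carrier_finite by auto
  moreover have "(\<Union>i\<in>I. ssupp (x i)) \<subseteq> M" using assms carrier_sub by auto
  ultimately show ?thesis unfolding skew_carrier_def using finite_subset by blast
qed

lemma skew_one_carrier: "skew_one \<in> skew_carrier M"
  using M_id by (auto simp: skew_carrier_def skew_one_def ssupp_iota)

lemma iota_carrier: "iota a \<in> skew_carrier M"
  using M_id by (auto simp: skew_carrier_def ssupp_iota)

lemma mult_one_right:
  assumes x: "x \<in> skew_carrier M"
  shows "skew_mult x skew_one = x"
proof
  fix p
  show "skew_mult x skew_one p = x p"
  proof (cases "p \<in> ssupp x")
    case True
    then have "{(m, m'). m \<in> ssupp x \<and> m' \<in> ssupp skew_one \<and> m \<circ> m' = p} = {(p, id)}"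
      by (auto simp: ssupp_iota skew_one_def)
    moreover have "p 1 = 1" using True carrier_sub[OF x] M_aut aut_1 by blast
    ultimately show ?thesis by (simp add: skew_mult_def skew_one_def iota_def)
  next
    case False
    have E: "{(m, m'). m \<in> ssupp x \<and> m' \<in> ssupp skew_one \<and> m \<circ> m' = p} = {}"
      using False by (auto simp: ssupp_iota skew_one_def)
    show ?thesis unfolding skew_mult_def E using False by (simp add: ssupp_def)
  qed
qed

lemma mult_one_left: "skew_mult skew_one x = x"
  by (simp add: skew_one_def iota_mult)

lemma mult_comb_left:
  assumes I: "finite I" and x: "\<And>i. i \<in> I \<Longrightarrow> x i \<in> skew_carrier M" and y: "y \<in> skew_carrier M"
  shows "skew_mult (\<lambda>p. \<Sum>i\<in>I. c i * x i p) y = (\<lambda>p. \<Sum>i\<in>I. c i * skew_mult (x i) y p)"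
proof
  fix p
  define A where "A = (\<Union>i\<in>I. ssupp (x i))"
  have A: "finite A" "A \<subseteq> M" using I x carrier_finite carrier_sub by (auto simp: A_def)
  have A0: "\<forall>m\<in>A. m 0 = 0" using A M_0 by auto
  have sA: "ssupp (\<lambda>p. \<Sum>i\<in>I. c i * x i p) \<subseteq> A"
  proof
    fix m assume "m \<in> ssupp (\<lambda>p. \<Sum>i\<in>I. c i * x i p)"
    then have "(\<Sum>i\<in>I. c i * x i m) \<noteq> 0" by (simp add: ssupp_def)
    then obtain i where "i \<in> I" "c i * x i m \<noteq> 0" by (meson sum.neutral)
    then show "m \<in> A" by (auto simp: A_def ssupp_def)
  qed
  have sAi: "ssupp (x i) \<subseteq> A" if "i \<in> I" for i using that by (auto simp: A_def)
  have By: "finite (ssupp y)" using carrier_finite[OF y] .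
  have "skew_mult (\<lambda>p. \<Sum>i\<in>I. c i * x i p) y p =
      (\<Sum>m\<in>A. \<Sum>m'\<in>ssupp y. if m \<circ> m' = p then (\<Sum>i\<in>I. c i * x i m) * m (y m') else 0)"
    by (rule skew_mult_gen[OF A(1) By sA order_refl A0])
  also have "\<dots> = (\<Sum>m\<in>A. \<Sum>m'\<in>ssupp y. \<Sum>i\<in>I. c i * (if m \<circ> m' = p then x i m * m (y m') else 0))"
    by (intro sum.cong refl) (auto simp: sum_distrib_right mult.assoc)
  also have "\<dots> = (\<Sum>i\<in>I. c i * (\<Sum>m\<in>A. \<Sum>m'\<in>ssupp y. if m \<circ> m' = p then x i m * m (y m') else 0))"
    by (simp add: sum_distrib_left sum.swap[of _ I])
  also have "\<dots> = (\<Sum>i\<in>I. c i * skew_mult (x i) y p)"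
    using skew_mult_gen[OF A(1) By sAi order_refl A0] by simp
  finally show "skew_mult (\<lambda>p. \<Sum>i\<in>I. c i * x i p) y p = (\<Sum>i\<in>I. c i * skew_mult (x i) y p)" .
qed

lemma mult_comb_right:
  assumes I: "finite I" and y: "\<And>i. i \<in> I \<Longrightarrow> y i \<in> skew_carrier M" and x: "x \<in> skew_carrier M"
    and d: "\<And>i. i \<in> I \<Longrightarrow> d i \<in> k"
  shows "skew_mult x (\<lambda>p. \<Sum>i\<in>I. d i * y i p) = (\<lambda>p. \<Sum>i\<in>I. d i * skew_mult x (y i) p)"
proof
  fix p
  define B where "B = (\<Union>i\<in>I. ssupp (y i))"
  have B: "finite B" using I y carrier_finite by (auto simp: B_def)
  have Ax: "finite (ssupp x)" "ssupp x \<subseteq> M" using carrier_finite[OF x] carrier_sub[OF x] by auto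
  have A0: "\<forall>m\<in>ssupp x. m 0 = 0" using Ax M_0 by auto
  have sB: "ssupp (\<lambda>p. \<Sum>i\<in>I. d i * y i p) \<subseteq> B"
  proof
    fix m assume "m \<in> ssupp (\<lambda>p. \<Sum>i\<in>I. d i * y i p)"
    then have "(\<Sum>i\<in>I. d i * y i m) \<noteq> 0" by (simp add: ssupp_def)
    then obtain i where "i \<in> I" "d i * y i m \<noteq> 0" by (meson sum.neutral)
    then show "m \<in> B" by (auto simp: B_def ssupp_def)
  qed
  have sBi: "ssupp (y i) \<subseteq> B" if "i \<in> I" for i using that by (auto simp: B_def)
  have key: "m (\<Sum>i\<in>I. d i * y i m') = (\<Sum>i\<in>I. d i * m (y i m'))" if "m \<in> ssupp x" for m m'
  proof -
    have a: "field_aut m" using that Ax M_aut by auto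
    show ?thesis using d that Ax M_fix by (auto simp: aut_sum[OF a] aut_mult[OF a] intro!: sum.cong)
  qed
  have "skew_mult x (\<lambda>p. \<Sum>i\<in>I. d i * y i p) p =
      (\<Sum>m\<in>ssupp x. \<Sum>m'\<in>B. if m \<circ> m' = p then x m * m (\<Sum>i\<in>I. d i * y i m') else 0)"
    by (rule skew_mult_gen[OF Ax(1) B order_refl sB A0])
  also have "\<dots> = (\<Sum>m\<in>ssupp x. \<Sum>m'\<in>B. \<Sum>i\<in>I. d i * (if m \<circ> m' = p then x m * m (y i m') else 0))"
    by (intro sum.cong refl) (auto simp: key sum_distrib_left mult.assoc mult.left_commute)
  also have "\<dots> = (\<Sum>i\<in>I. d i * (\<Sum>m\<in>ssupp x. \<Sum>m'\<in>B. if m \<circ> m' = p then x m * m (y i m') else 0))"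
    by (simp add: sum_distrib_left sum.swap[of _ I])
  also have "\<dots> = (\<Sum>i\<in>I. d i * skew_mult x (y i) p)"
    using skew_mult_gen[OF Ax(1) B order_refl sBi A0] by simp
  finally show "skew_mult x (\<lambda>p. \<Sum>i\<in>I. d i * y i p) p = (\<Sum>i\<in>I. d i * skew_mult x (y i) p)" .
qed

end

context skewM
begin

lemma \<phi>_inj: "inj_on \<phi> (Zn n)" using \<phi>_bij by (simp add: bij_betw_def)
lemma \<phi>_img: "\<phi> ` Zn n = M" using \<phi>_bij by (simp add: bij_betw_def)
lemma \<phi>_in: "a \<in> Zn n \<Longrightarrow> \<phi> a \<in> M" using \<phi>_img by auto
lemma \<phi>_surj: "m \<in> M \<Longrightarrow> \<exists>a\<in>Zn n. \<phi> a = m" using \<phi>_img by auto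
lemma \<phi>_add: "a \<in> Zn n \<Longrightarrow> b \<in> Zn n \<Longrightarrow> \<phi> (vadd a b) = \<phi> a \<circ> \<phi> b"
  using \<phi>_hom by (simp add: vadd_def)

definition istop :: "'L skew \<Rightarrow> (nat \<Rightarrow> int) \<Rightarrow> bool" where
  "istop x s \<longleftrightarrow> s \<in> Zn n \<and> x (\<phi> s) \<noteq> 0 \<and> (\<forall>r\<in>Zn n. x (\<phi> r) \<noteq> 0 \<longrightarrow> LZ r \<le> LZ s)"

lemma top_exists:
  assumes x: "x \<in> skew_carrier M" and p: "x p \<noteq> 0"
  shows "\<exists>s. istop x s"
proof -
  define Sx where "Sx = {r \<in> Zn n. x (\<phi> r) \<noteq> 0}"
  have "\<phi> ` Sx \<subseteq> ssupp x" by (auto simp: Sx_def ssupp_def)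
  then have "finite (\<phi> ` Sx)" using carrier_finite[OF x] finite_subset by blast
  moreover have "inj_on \<phi> Sx" using \<phi>_inj by (rule inj_on_subset) (auto simp: Sx_def)
  ultimately have fin: "finite Sx" using finite_imageD by blast
  have "p \<in> M" using p carrier_sub[OF x] by (auto simp: ssupp_def)
  then obtain a where a: "a \<in> Zn n" "\<phi> a = p" using \<phi>_surj by blast
  then have ne: "Sx \<noteq> {}" using p by (auto simp: Sx_def)
  have "Max (LZ ` Sx) \<in> LZ ` Sx" using fin ne by (intro Max_in) auto
  then obtain s where s: "s \<in> Sx" "Max (LZ ` Sx) = LZ s" by blast
  have "\<forall>r\<in>Zn n. x (\<phi> r) \<noteq> 0 \<longrightarrow> LZ r \<le> LZ s"
    using fin s by (auto simp: Sx_def intro!: Max_ge[of "LZ ` Sx", unfolded s(2)])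
  then show ?thesis using s by (auto simp: istop_def Sx_def)
qed

lemma top_unique: "istop x s \<Longrightarrow> istop x t \<Longrightarrow> s = t"
  unfolding istop_def by (metis antisym lexz.inject)

definition topv :: "'L skew \<Rightarrow> (nat \<Rightarrow> int)" where
  "topv x = (THE s. istop x s)"

lemma topv: "istop x s \<Longrightarrow> topv x = s"
  unfolding topv_def using top_unique by blast

lemma vadd_cancel: "vadd s b = vadd s t \<Longrightarrow> b = t"
  by (auto simp: vadd_def fun_eq_iff)

lemma top_mult:
  assumes x: "x \<in> skew_carrier M" and y: "y \<in> skew_carrier M"
    and s: "istop x s" and t: "istop y t"
  shows "istop (skew_mult x y) (vadd s t)"
proof -
  have sZ: "s \<in> Zn n" and tZ: "t \<in> Zn n" using s t by (auto simp: istop_def)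
  have stZ: "vadd s t \<in> Zn n" using sZ tZ by (rule Zn_vadd)
  have decomp: "\<exists>a b. a \<in> Zn n \<and> b \<in> Zn n \<and> m = \<phi> a \<and> m' = \<phi> b \<and> vadd a b = r \<and> LZ a \<le> LZ s \<and> LZ b \<le> LZ t"
    if "(m, m') \<in> {(m, m'). m \<in> ssupp x \<and> m' \<in> ssupp y \<and> m \<circ> m' = \<phi> r}" "r \<in> Zn n" for m m' r
  proof -
    have m: "m \<in> M" "x m \<noteq> 0" and m': "m' \<in> M" "y m' \<noteq> 0" and mm: "m \<circ> m' = \<phi> r"
      using that carrier_sub[OF x] carrier_sub[OF y] by (auto simp: ssupp_def)
    obtain a where a: "a \<in> Zn n" "\<phi> a = m" using \<phi>_surj m(1) by blast
    obtain b where b: "b \<in> Zn n" "\<phi> b = m'" using \<phi>_surj m'(1) by blast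
    have "\<phi> (vadd a b) = \<phi> r" using \<phi>_add[OF a(1) b(1)] a b mm by simp
    then have "vadd a b = r" using \<phi>_inj Zn_vadd[OF a(1) b(1)] that(2) by (auto dest: inj_onD)
    moreover have "LZ a \<le> LZ s" using s a m by (auto simp: istop_def)
    moreover have "LZ b \<le> LZ t" using t b m' by (auto simp: istop_def)
    ultimately show ?thesis using a b by blast
  qed
  have bound: "LZ (vadd a b) \<le> LZ (vadd s t)" if "LZ a \<le> LZ s" "LZ b \<le> LZ t" for a b
  proof -
    have "LZ (vadd a b) \<le> LZ (vadd s b)" using lexz_add_le[OF that(1)] .
    also have "LZ (vadd s b) \<le> LZ (vadd s t)" using lexz_add_le[OF that(2), of s] by (simp add: vadd_comm)
    finally show ?thesis .
  qed
  have upper: "\<forall>r\<in>Zn n. skew_mult x y (\<phi> r) \<noteq> 0 \<longrightarrow> LZ r \<le> LZ (vadd s t)"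
  proof (intro ballI impI)
    fix r assume r: "r \<in> Zn n" and nz: "skew_mult x y (\<phi> r) \<noteq> 0"
    show "LZ r \<le> LZ (vadd s t)"
    proof (rule ccontr)
      assume "\<not> LZ r \<le> LZ (vadd s t)"
      then have lt: "LZ (vadd s t) < LZ r" using not_le by blast
      have E: "{(m, m'). m \<in> ssupp x \<and> m' \<in> ssupp y \<and> m \<circ> m' = \<phi> r} = {}"
      proof (rule ccontr)
        assume "{(m, m'). m \<in> ssupp x \<and> m' \<in> ssupp y \<and> m \<circ> m' = \<phi> r} \<noteq> {}"
        then obtain m m' where "(m, m') \<in> {(m, m'). m \<in> ssupp x \<and> m' \<in> ssupp y \<and> m \<circ> m' = \<phi> r}" by auto
        from decomp[OF this r] obtain a b where "vadd a b = r" "LZ a \<le> LZ s" "LZ b \<le> LZ t" by blast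
        then show False using bound lt by (metis leD)
      qed
      have "skew_mult x y (\<phi> r) = 0" unfolding skew_mult_def E by simp
      then show False using nz by simp
    qed
  qed
  have E: "{(m, m'). m \<in> ssupp x \<and> m' \<in> ssupp y \<and> m \<circ> m' = \<phi> (vadd s t)} = {(\<phi> s, \<phi> t)}"
  proof
    show "{(m, m'). m \<in> ssupp x \<and> m' \<in> ssupp y \<and> m \<circ> m' = \<phi> (vadd s t)} \<subseteq> {(\<phi> s, \<phi> t)}"
    proof
      fix z assume z: "z \<in> {(m, m'). m \<in> ssupp x \<and> m' \<in> ssupp y \<and> m \<circ> m' = \<phi> (vadd s t)}"
      obtain m m' where zz: "z = (m, m')" by (cases z)
      from decomp[OF z[unfolded zz] stZ] obtain a b where ab: "a \<in> Zn n" "b \<in> Zn n" "m = \<phi> a" "m' = \<phi> b"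
        "vadd a b = vadd s t" "LZ a \<le> LZ s" "LZ b \<le> LZ t" by blast
      have "a = s"
      proof (rule ccontr)
        assume "a \<noteq> s"
        then have "LZ a < LZ s" using ab(6) by (simp add: less_le)
        then have "LZ (vadd a b) < LZ (vadd s b)" by (rule lexz_add_less)
        also have "LZ (vadd s b) \<le> LZ (vadd s t)" using lexz_add_le[OF ab(7), of s] by (simp add: vadd_comm)
        finally show False using ab(5) by simp
      qed
      then have "b = t" using ab(5) vadd_cancel by blast
      then show "z \<in> {(\<phi> s, \<phi> t)}" using zz ab \<open>a = s\<close> by simp
    qed
    show "{(\<phi> s, \<phi> t)} \<subseteq> {(m, m'). m \<in> ssupp x \<and> m' \<in> ssupp y \<and> m \<circ> m' = \<phi> (vadd s t)}"
      using s t \<phi>_add[OF sZ tZ] by (auto simp: istop_def ssupp_def)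
  qed
  have val: "skew_mult x y (\<phi> (vadd s t)) = x (\<phi> s) * \<phi> s (y (\<phi> t))"
    unfolding skew_mult_def E by simp
  have "field_aut (\<phi> s)" using M_aut \<phi>_in[OF sZ] by blast
  then have "\<phi> s (y (\<phi> t)) \<noteq> 0" using t aut_nonzero by (auto simp: istop_def)
  then have "skew_mult x y (\<phi> (vadd s t)) \<noteq> 0" using val s by (simp add: istop_def)
  then show ?thesis using upper stZ by (simp add: istop_def)
qed

lemma top_scalar: "istop x s \<Longrightarrow> c \<noteq> 0 \<Longrightarrow> istop (\<lambda>p. c * x p) s"
  by (simp add: istop_def)

lemma istop_nz: "istop x s \<Longrightarrow> \<exists>p. x p \<noteq> 0"
  by (auto simp: istop_def)

definition zv :: "nat \<Rightarrow> int" where "zv = (\<lambda>_. 0)"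

lemma zv_Zn: "zv \<in> Zn n" by (simp add: zv_def Zn_def)

lemma \<phi>_zero: "\<phi> zv = id"
proof -
  have "\<phi> zv = \<phi> zv \<circ> \<phi> zv" using \<phi>_add[OF zv_Zn zv_Zn] by (simp add: vadd_def zv_def)
  moreover have "inj (\<phi> zv)" using M_aut[OF \<phi>_in[OF zv_Zn]] aut_inj by blast
  ultimately show ?thesis by (metis comp_apply eq_id_iff injD)
qed

lemma top_one: "istop skew_one zv"
proof -
  have "\<phi> r = id \<Longrightarrow> r = zv" if "r \<in> Zn n" for r
    using \<phi>_zero inj_onD[OF \<phi>_inj, of r zv] that zv_Zn by auto
  then show ?thesis using zv_Zn \<phi>_zero by (auto simp: istop_def skew_one_def iota_def)
qed

lemma top_foldl:
  "x \<in> skew_carrier M \<Longrightarrow> istop x s \<Longrightarrow> (\<forall>v\<in>set L. v \<in> skew_carrier M \<and> istop v (topv v)) \<Longrightarrow>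
    istop (foldl skew_mult x L) (\<lambda>i. s i + (\<Sum>v\<leftarrow>L. topv v i)) \<and> foldl skew_mult x L \<in> skew_carrier M"
proof (induction L arbitrary: x s)
  case Nil then show ?case by simp
next
  case (Cons v L)
  have v: "v \<in> skew_carrier M" "istop v (topv v)" using Cons.prems by auto
  have xv: "skew_mult x v \<in> skew_carrier M" using mult_carrier Cons.prems(1) v(1) by blast
  have "istop (skew_mult x v) (vadd s (topv v))" using top_mult Cons.prems(1,2) v by blast
  from Cons.IH[OF xv this] Cons.prems(3)
  show ?case by (simp add: vadd_def algebra_simps)
qed

end

lemma vprods_foldl:
  "x \<in> vprods V m \<Longrightarrow> set L \<subseteq> V \<Longrightarrow> foldl skew_mult x L \<in> vprods V (m + length L)"
proof (induction L arbitrary: x m)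
  case Nil then show ?case by simp
next
  case (Cons v L)
  have "skew_mult x v \<in> vprods V (Suc m)" using Cons.prems by (auto simp: set_prod_def)
  from Cons.IH[OF this] Cons.prems show ?case by simp
qed

lemma vprods_mono: "V \<subseteq> V' \<Longrightarrow> vprods V m \<subseteq> vprods V' m"
  by (induction m) (auto simp: set_prod_def)

lemma set_prod_finite: "finite A \<Longrightarrow> finite B \<Longrightarrow> finite (set_prod A B)"
proof -
  assume "finite A" "finite B"
  moreover have "set_prod A B = (\<lambda>(a, b). skew_mult a b) ` (A \<times> B)" by (auto simp: set_prod_def)
  ultimately show ?thesis by simp
qed

lemma vprods_finite: "finite S \<Longrightarrow> finite (vprods S m)"
  by (induction m) (auto simp: set_prod_finite)

context skewM
begin

lemma vprods_carrier: "V \<subseteq> skew_carrier M \<Longrightarrow> vprods V m \<subseteq> skew_carrier M"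
proof (induction m)
  case 0 then show ?case by (simp add: skew_one_carrier)
next
  case (Suc m)
  show ?case
  proof
    fix z assume "z \<in> vprods V (Suc m)"
    then obtain a b where "z = skew_mult a b" "a \<in> vprods V m" "b \<in> V" by (auto simp: set_prod_def)
    then show "z \<in> skew_carrier M" using Suc by (auto intro!: mult_carrier)
  qed
qed

lemma vprods_one: "skew_one \<in> V \<Longrightarrow> skew_one \<in> vprods V m"
proof (induction m)
  case 0 then show ?case by simp
next
  case (Suc m)
  have m: "skew_mult skew_one skew_one \<in> vprods V (Suc m)" using Suc by (auto simp: set_prod_def)
  have E: "skew_mult skew_one skew_one = skew_one" by (rule mult_one_left)
  show ?case using m unfolding E .
qed

lemma vprods_pad:
  assumes V: "V \<subseteq> skew_carrier M" "skew_one \<in> V" and x: "x \<in> vprods V m" and mm: "m \<le> m'"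
  shows "x \<in> vprods V m'"
  using mm
proof (induction m' rule: dec_induct)
  case base then show ?case using x by simp
next
  case (step j)
  have "x \<in> skew_carrier M" using vprods_carrier[OF V(1)] step.IH by auto
  then have "skew_mult x skew_one = x" by (rule mult_one_right)
  moreover have "skew_mult x skew_one \<in> vprods V (Suc j)" using step.IH V(2) by (auto simp: set_prod_def)
  ultimately show ?case by simp
qed

lemma vprods_in_span:
  assumes F: "is_subfield k" and S: "finite S" "S \<subseteq> skew_carrier M"
  shows "vprods (kspan k S) m \<subseteq> kspan k (vprods S m)"
proof (induction m)
  case 0 then show ?case using lspan_sub[OF F] by (auto simp: kspan_eq)
next
  case (Suc m)
  show ?case
  proof
    fix z assume "z \<in> vprods (kspan k S) (Suc m)"
    then obtain x v where z: "z = skew_mult x v" and x: "x \<in> vprods (kspan k S) m" and v: "v \<in> kspan k S"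
      by (auto simp: set_prod_def)
    have "x \<in> kspan k (vprods S m)" using Suc x by blast
    then obtain T c where T: "finite T" "T \<subseteq> vprods S m" "c ` T \<subseteq> k" "x = (\<lambda>p. \<Sum>q\<in>T. c q * q p)"
      unfolding kspan_eq lspan_def by blast
    obtain T' d where T': "finite T'" "T' \<subseteq> S" "d ` T' \<subseteq> k" "v = (\<lambda>p. \<Sum>s\<in>T'. d s * s p)"
      using v unfolding kspan_eq lspan_def by blast
    have Tc: "\<And>q. q \<in> T \<Longrightarrow> q \<in> skew_carrier M" using T(2) vprods_carrier[OF S(2)] by auto
    have T'c: "\<And>s. s \<in> T' \<Longrightarrow> s \<in> skew_carrier M" using T'(2) S(2) by auto
    have vc: "v \<in> skew_carrier M" unfolding T'(4) by (rule comb_carrier[OF T'(1) T'c])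
    have "z = (\<lambda>p. \<Sum>q\<in>T. c q * skew_mult q v p)"
      unfolding z T(4) by (rule mult_comb_left[OF T(1) Tc vc])
    also have "\<dots> = (\<lambda>p. \<Sum>q\<in>T. c q * (\<Sum>s\<in>T'. d s * skew_mult q s p))"
    proof (intro ext sum.cong refl)
      fix p q assume q: "q \<in> T"
      have "skew_mult q v = (\<lambda>p. \<Sum>s\<in>T'. d s * skew_mult q s p)"
        unfolding T'(4) using mult_comb_right[of T' "\<lambda>s. s" q d] T'(1) T'c Tc[OF q] T'(3) by auto
      then show "c q * skew_mult q v p = c q * (\<Sum>s\<in>T'. d s * skew_mult q s p)" by simp
    qed
    also have "\<dots> = (\<lambda>p. \<Sum>i\<in>T \<times> T'. (c (fst i) * d (snd i)) * skew_mult (fst i) (snd i) p)"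
      by (simp add: sum.cartesian_product split_beta sum_distrib_left mult.assoc)
    also have "\<dots> \<in> lspan k (vprods S (Suc m))"
      using T T' F by (intro lspan_indexed) (auto simp: set_prod_def intro!: subfield_mult, blast)
    finally show "z \<in> kspan k (vprods S (Suc m))" by (simp add: kspan_eq)
  qed
qed

lemma kspan_vprods_eq:
  assumes F: "is_subfield k" and S: "finite S" "S \<subseteq> skew_carrier M"
  shows "kspan k (vprods (kspan k S) m) = kspan k (vprods S m)"
proof
  show "kspan k (vprods (kspan k S) m) \<subseteq> kspan k (vprods S m)"
    unfolding kspan_eq by (rule lspan_trans[OF F vprods_in_span[OF assms, unfolded kspan_eq]])
  have "S \<subseteq> kspan k S" using lspan_sub[OF F] by (simp add: kspan_eq)
  then show "kspan k (vprods S m) \<subseteq> kspan k (vprods (kspan k S) m)"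
    unfolding kspan_eq by (intro lspan_mono vprods_mono)
qed

end

definition scal :: "'L::field skew \<Rightarrow> bool" where
  "scal x \<longleftrightarrow> (\<forall>p. p \<noteq> id \<longrightarrow> x p = 0)"

lemma scal_iota: assumes "scal x" shows "x = iota (x id)"
proof
  fix p show "x p = iota (x id) p" using assms by (cases "p = id") (auto simp: scal_def iota_def)
qed

lemma iota_scal: "scal (iota a)" by (simp add: scal_def iota_def)

lemma scal_comb: "(\<And>i. i \<in> I \<Longrightarrow> scal (x i)) \<Longrightarrow> scal (\<lambda>p. \<Sum>i\<in>I. c i * x i p)"
  by (auto simp: scal_def intro!: sum.neutral)

lemma scal_mult: "scal x \<Longrightarrow> scal y \<Longrightarrow> scal (skew_mult x y)"
  by (metis iota_iota iota_scal scal_iota)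

lemma vprods_scal: "(\<And>x. x \<in> S \<Longrightarrow> scal x) \<Longrightarrow> x \<in> vprods S m \<Longrightarrow> scal x"
proof (induction m arbitrary: x)
  case 0 then show ?case by (simp add: skew_one_def iota_scal)
next
  case (Suc m)
  then obtain a b where "x = skew_mult a b" "a \<in> vprods S m" "b \<in> S" by (auto simp: set_prod_def)
  then show ?case using Suc by (auto intro!: scal_mult)
qed

lemma sum_list_concat_map: "sum_list (map f (concat (map g js))) = sum_list (map (\<lambda>j. sum_list (map f (g j))) js)"
  by (induction js) auto

context skewM
begin

lemma foldl_comb:
  "finite I \<Longrightarrow> (\<And>i. i \<in> I \<Longrightarrow> x i \<in> skew_carrier M) \<Longrightarrow> set L \<subseteq> skew_carrier M \<Longrightarrow>
   foldl skew_mult (\<lambda>p. \<Sum>i\<in>I. c i * x i p) L = (\<lambda>p. \<Sum>i\<in>I. c i * foldl skew_mult (x i) L p)"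
proof (induction L arbitrary: x)
  case Nil then show ?case by simp
next
  case (Cons v L)
  have v: "v \<in> skew_carrier M" using Cons.prems by auto
  have "skew_mult (\<lambda>p. \<Sum>i\<in>I. c i * x i p) v = (\<lambda>p. \<Sum>i\<in>I. c i * skew_mult (x i) v p)"
    by (rule mult_comb_left[OF Cons.prems(1,2) v])
  moreover have "\<And>i. i \<in> I \<Longrightarrow> skew_mult (x i) v \<in> skew_carrier M"
    using Cons.prems(2) v by (rule mult_carrier)
  ultimately show ?case using Cons.IH[of "\<lambda>i. skew_mult (x i) v"] Cons.prems by simp
qed

lemma growth:
  fixes S0 S :: "'L skew set" and u :: "nat \<Rightarrow> 'L skew" and t :: "nat \<Rightarrow> nat \<Rightarrow> int" and m :: nat
  assumes F: "is_subfield k"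
    and S0: "finite S0" "\<And>x. x \<in> S0 \<Longrightarrow> scal x" and one0: "skew_one \<in> kspan k S0"
    and S: "finite S" "S \<subseteq> skew_carrier M" "S0 \<subseteq> S"
    and u: "\<And>j. j < n \<Longrightarrow> u j \<in> S" "\<And>j. j < n \<Longrightarrow> istop (u j) (t j)"
    and ind: "\<forall>c::nat \<Rightarrow> int. (\<forall>i. (\<Sum>j<n. c j * t j i) = 0) \<longrightarrow> (\<forall>j<n. c j = 0)"
  shows "(m + 1) ^ n * kdim k (kspan k (vprods (kspan k S0) m)) \<le> kdim k (kspan k (vprods (kspan k S) ((n + 1) * m)))"
proof -
  have S0c: "S0 \<subseteq> skew_carrier M"
  proof
    fix x assume "x \<in> S0"
    then have "x = iota (x id)" using S0(2) scal_iota by blast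
    then show "x \<in> skew_carrier M" using iota_carrier by metis
  qed
  define W0 where "W0 = kspan k (vprods (kspan k S0) m)"
  have W0: "W0 = kspan k (vprods S0 m)" unfolding W0_def by (rule kspan_vprods_eq[OF F S0(1) S0c])
  obtain B0 where B0: "finite B0" "card B0 = kdim k W0" "kspan k B0 = W0" "B0 \<subseteq> W0" "indep k B0 (\<lambda>s. s)"
    using kdim_basis[OF F vprods_finite[OF S0(1)] W0] by blast
  have W0scal: "scal x" if "x \<in> W0" for x
  proof -
    have "x \<in> lspan k (vprods S0 m)" using that by (simp add: W0 kspan_eq)
    then obtain T c where "T \<subseteq> vprods S0 m" "x = (\<lambda>p. \<Sum>q\<in>T. c q * q p)"
      unfolding lspan_def by blast
    then show ?thesis using vprods_scal[OF S0(2)] by (auto intro!: scal_comb)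
  qed
  define N where "N = (n + 1) * m"
  define W where "W = kspan k (vprods (kspan k S) N)"
  have Wf: "W = kspan k (vprods S N)" unfolding W_def by (rule kspan_vprods_eq[OF F S(1,2)])
  define V where "V = kspan k S"
  have SV: "S \<subseteq> V" using lspan_sub[OF F] by (simp add: V_def kspan_eq)
  have Vc: "V \<subseteq> skew_carrier M"
  proof
    fix x assume "x \<in> V"
    then obtain T c where "finite T" "T \<subseteq> S" "x = (\<lambda>p. \<Sum>q\<in>T. c q * q p)"
      unfolding V_def kspan_eq lspan_def by blast
    then show "x \<in> skew_carrier M" using S(2) by (auto intro!: comb_carrier)
  qed
  have oneV: "skew_one \<in> V" using one0 lspan_mono[OF S(3)] by (auto simp: V_def kspan_eq)
  define A where "A = PiE {..<n} (\<lambda>_. {..m})"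
  define L where "L a = concat (map (\<lambda>j. replicate (a j) (u j)) [0..<n])" for a :: "nat \<Rightarrow> nat"
  define \<tau> where "\<tau> a = (\<lambda>i. \<Sum>j<n. int (a j) * t j i)" for a :: "nat \<Rightarrow> nat"
  define P where "P a = foldl skew_mult skew_one (L a)" for a
  have topu: "topv (u j) = t j" if "j < n" for j using u(2)[OF that] by (rule topv)
  have Lset: "set (L a) \<subseteq> u ` {..<n}" for a by (auto simp: L_def)
  have LV: "set (L a) \<subseteq> V" for a using Lset u(1) SV by fastforce
  have Lc: "set (L a) \<subseteq> skew_carrier M" for a using LV Vc by blast
  have len: "length (L a) \<le> n * m" if "a \<in> A" for a
  proof -
    have "length (L a) = (\<Sum>j\<leftarrow>[0..<n]. a j)" by (simp add: L_def length_concat comp_def)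
    also have "\<dots> = (\<Sum>j<n. a j)"
      by (metis atLeast0LessThan set_upt sum_set_upt_conv_sum_list_nat)
    also have "\<dots> \<le> (\<Sum>j<n. m)" using that by (intro sum_mono) (auto simp: A_def)
    finally show ?thesis by simp
  qed
  have topP: "istop (P a) (\<tau> a) \<and> P a \<in> skew_carrier M" for a
  proof -
    have "\<forall>v\<in>set (L a). v \<in> skew_carrier M \<and> istop v (topv v)"
      using Lset Lc u(2) topu by fastforce
    from top_foldl[OF skew_one_carrier top_one this]
    have *: "istop (P a) (\<lambda>i. zv i + (\<Sum>v\<leftarrow>L a. topv v i)) \<and> P a \<in> skew_carrier M"
      by (simp add: P_def)
    have "(\<Sum>v\<leftarrow>L a. topv v i) = \<tau> a i" for i
    proof -
      have "(\<Sum>v\<leftarrow>L a. topv v i) = (\<Sum>j\<leftarrow>[0..<n]. int (a j) * t j i)"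
        unfolding L_def sum_list_concat_map
        by (intro arg_cong[where f = sum_list] map_cong refl) (simp add: topu sum_list_replicate)
      also have "\<dots> = \<tau> a i"
        by (simp add: \<tau>_def atLeast0LessThan[symmetric] sum_set_upt_conv_sum_list_nat[symmetric])
      finally show ?thesis .
    qed
    then show ?thesis using * by (simp add: zv_def)
  qed
  have \<tau>inj: "inj_on \<tau> A"
  proof (rule inj_onI)
    fix a a' assume a: "a \<in> A" and a': "a' \<in> A" and eq: "\<tau> a = \<tau> a'"
    have "\<forall>i. (\<Sum>j<n. (int (a j) - int (a' j)) * t j i) = 0"
    proof
      fix i
      have "\<tau> a i = \<tau> a' i" using eq by simp
      then show "(\<Sum>j<n. (int (a j) - int (a' j)) * t j i) = 0"
        by (simp add: \<tau>_def left_diff_distrib sum_subtractf)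
    qed
    then have "\<forall>j<n. int (a j) - int (a' j) = 0"
      using ind[rule_format, of "\<lambda>j. int (a j) - int (a' j)"] by blast
    then have "\<forall>j<n. a j = a' j" by simp
    then show "a = a'" using a a' unfolding A_def by (metis PiE_ext lessThan_iff)
  qed
  define E where "E z = foldl skew_mult (fst z) (L (snd z))" for z
  have EW: "E z \<in> W" if zin: "z \<in> B0 \<times> A" for z
  proof -
    obtain b a where z: "z = (b, a)" "b \<in> B0" "a \<in> A" using zin by (cases z) auto
    have "b \<in> kspan k (vprods (kspan k S0) m)" using B0(4) z(2) W0_def by auto
    then obtain T c where T: "finite T" "T \<subseteq> vprods (kspan k S0) m" "c ` T \<subseteq> k" "b = (\<lambda>p. \<Sum>q\<in>T. c q * q p)"
      unfolding kspan_eq lspan_def by blast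
    have S0V: "kspan k S0 \<subseteq> V" unfolding V_def kspan_eq by (rule lspan_mono[OF S(3)])
    have Tv: "T \<subseteq> vprods V m" using T(2) vprods_mono[OF S0V] by blast
    have Tc: "\<And>q. q \<in> T \<Longrightarrow> q \<in> skew_carrier M" using Tv vprods_carrier[OF Vc] by blast
    have "E z = (\<lambda>p. \<Sum>q\<in>T. c q * foldl skew_mult q (L a) p)"
      unfolding E_def z(1) fst_conv snd_conv T(4) by (rule foldl_comb[OF T(1) Tc Lc])
    also have "\<dots> \<in> lspan k (vprods V N)"
    proof (rule lspan_indexed[OF F T(1)])
      fix q assume q: "q \<in> T"
      have "foldl skew_mult q (L a) \<in> vprods V (m + length (L a))"
        using vprods_foldl Tv q LV by blast
      moreover have "m + length (L a) \<le> N" using len[OF z(3)] by (simp add: N_def)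
      ultimately show "foldl skew_mult q (L a) \<in> vprods V N" using vprods_pad[OF Vc oneV] by blast
    next
      fix q assume "q \<in> T" then show "c q \<in> k" using T(3) by auto
    qed
    finally show ?thesis by (simp add: W_def V_def kspan_eq)
  qed
  have Escal: "E (b, a) = (\<lambda>p. b id * P a p)" if "b \<in> B0" for b a
  proof -
    define \<beta> where "\<beta> = b id"
    have bi: "b = iota \<beta>" unfolding \<beta>_def using W0scal B0(4) that by (intro scal_iota) auto
    have ie: "(\<lambda>p. \<Sum>i\<in>{()}. \<beta> * skew_one p) = iota \<beta>" by (auto simp: skew_one_def iota_def)
    have "E (b, a) = foldl skew_mult (\<lambda>p. \<Sum>i\<in>{()}. \<beta> * skew_one p) (L a)"
      unfolding ie by (simp add: E_def bi)
    also have "\<dots> = (\<lambda>p. \<Sum>i\<in>{()}. \<beta> * foldl skew_mult skew_one (L a) p)"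
      by (rule foldl_comb) (auto simp: skew_one_carrier Lc)
    finally show ?thesis by (simp add: P_def \<beta>_def)
  qed
  have indE: "indep k (B0 \<times> A) E"
    unfolding indep_def
  proof (intro allI impI)
    fix c assume c: "(\<forall>z\<in>B0 \<times> A. c z \<in> k) \<and> (\<forall>p. (\<Sum>z\<in>B0 \<times> A. c z * E z p) = 0)"
    define Nz where "Nz = {a \<in> A. \<exists>b\<in>B0. c (b, a) \<noteq> 0}"
    show "\<forall>z\<in>B0 \<times> A. c z = 0"
    proof (rule ccontr)
      assume "\<not> (\<forall>z\<in>B0 \<times> A. c z = 0)"
      then have ne: "Nz \<noteq> {}" by (auto simp: Nz_def)
      have finA: "finite A" by (simp add: A_def finite_PiE)
      have finNz: "finite Nz" using finA by (simp add: Nz_def)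
      have "Max (LZ ` \<tau> ` Nz) \<in> LZ ` \<tau> ` Nz" using finNz ne by (intro Max_in) auto
      then obtain a0 where a0: "a0 \<in> Nz" "Max (LZ ` \<tau> ` Nz) = LZ (\<tau> a0)" by blast
      have a0A: "a0 \<in> A" using a0 by (simp add: Nz_def)
      have maxa0: "LZ (\<tau> a) \<le> LZ (\<tau> a0)" if "a \<in> Nz" for a
        using finNz that a0(2)[symmetric] by (auto intro!: Max_ge)
      define p0 where "p0 = \<phi> (\<tau> a0)"
      have zero: "(\<Sum>b\<in>B0. c (b, a) * E (b, a) p0) = 0" if "a \<in> A" "a \<noteq> a0" for a
      proof (cases "a \<in> Nz")
        case False
        then show ?thesis using that by (auto simp: Nz_def intro!: sum.neutral)
      next
        case True
        have "\<tau> a \<noteq> \<tau> a0" using \<tau>inj that a0A by (auto dest: inj_onD)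
        then have lt: "LZ (\<tau> a) < LZ (\<tau> a0)" using maxa0[OF True] by (auto simp: less_le)
        have "P a p0 = 0"
        proof (rule ccontr)
          assume "P a p0 \<noteq> 0"
          then have "LZ (\<tau> a0) \<le> LZ (\<tau> a)" using topP[of a] topP[of a0] by (auto simp: istop_def p0_def)
          then show False using lt by (meson leD)
        qed
        then show ?thesis by (auto simp: Escal intro!: sum.neutral)
      qed
      have "0 = (\<Sum>z\<in>B0 \<times> A. c z * E z p0)" using c by simp
      also have "\<dots> = (\<Sum>b\<in>B0. \<Sum>a\<in>A. c (b, a) * E (b, a) p0)"
        by (simp add: sum.cartesian_product split_beta)
      also have "\<dots> = (\<Sum>a\<in>A. \<Sum>b\<in>B0. c (b, a) * E (b, a) p0)"
        by (rule sum.swap)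
      also have "\<dots> = (\<Sum>b\<in>B0. c (b, a0) * E (b, a0) p0)"
        using finA a0A zero by (subst sum.remove[OF finA a0A]) (auto intro!: sum.neutral)
      also have "\<dots> = (\<Sum>b\<in>B0. c (b, a0) * b id) * P a0 p0"
        by (simp add: Escal sum_distrib_right mult.assoc)
      finally have "(\<Sum>b\<in>B0. c (b, a0) * b id) * P a0 p0 = 0" by simp
      moreover have "P a0 p0 \<noteq> 0" using topP[of a0] by (simp add: istop_def p0_def)
      ultimately have s0: "(\<Sum>b\<in>B0. c (b, a0) * b id) = 0" by simp
      have "\<forall>p. (\<Sum>b\<in>B0. c (b, a0) * b p) = 0"
      proof
        fix p
        show "(\<Sum>b\<in>B0. c (b, a0) * b p) = 0"
        proof (cases "p = id")
          case True then show ?thesis using s0 by simp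
        next
          case False
          then show ?thesis using W0scal B0(4) by (auto simp: scal_def intro!: sum.neutral)
        qed
      qed
      moreover have "\<forall>b\<in>B0. c (b, a0) \<in> k" using c a0A by auto
      ultimately have "\<forall>b\<in>B0. c (b, a0) = 0" using B0(5) unfolding indep_def
        by (elim allE[where x = "\<lambda>b. c (b, a0)"]) blast
      then show False using a0(1) by (auto simp: Nz_def)
    qed
  qed
  have "card (B0 \<times> A) \<le> kdim k W"
    using kdim_ge[OF F vprods_finite[OF S(1)] Wf _ _ indE] EW B0(1) by (auto simp: A_def finite_PiE)
  moreover have "card (B0 \<times> A) = kdim k W0 * (m + 1) ^ n"
    using B0 by (simp add: card_cartesian_product A_def card_PiE)
  ultimately show ?thesis by (simp add: W_def N_def W0_def mult.commute)
qed

end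

lemma freq_of_less_limsup:
  fixes X :: "nat \<Rightarrow> ereal"
  assumes "z < limsup X"
  shows "\<exists>m\<ge>N. z < X m"
proof (rule ccontr)
  assume "\<not> (\<exists>m\<ge>N. z < X m)"
  then have ev: "\<forall>m\<ge>N. X m \<le> z" by (simp add: not_less)
  have "limsup X \<le> z"
    unfolding Limsup_le_iff
  proof (intro allI impI)
    fix y assume "z < y"
    then show "\<forall>\<^sub>F x in sequentially. X x < y"
      using ev by (auto simp: eventually_sequentially intro: le_less_trans)
  qed
  then show False using assms by simp
qed

lemma le_limsup_of_freq:
  fixes X :: "nat \<Rightarrow> ereal"
  assumes "\<And>N. \<exists>m\<ge>N. y < X m"
  shows "y \<le> limsup X"
proof (rule ccontr)
  assume "\<not> y \<le> limsup X"
  then have "limsup X < y" by simp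
  then have "\<forall>\<^sub>F x in sequentially. X x < y" using Limsup_le_iff[where C="limsup X" and F=sequentially and X=X] by blast
  then obtain N where "\<forall>m\<ge>N. X m < y" by (auto simp: eventually_sequentially)
  then show False using assms[of N] by (meson less_asym)
qed

lemma ln_nat_nonneg: "0 \<le> ln (real (x::nat))"
  by (cases "x = 0") auto

lemma limsup_growth:
  fixes a b :: "nat \<Rightarrow> nat" and n :: nat
  assumes a1: "\<And>m. 1 \<le> a m" and ab: "\<And>m. (m + 1) ^ n * a m \<le> b ((n + 1) * m)"
  shows "limsup (\<lambda>m. ereal (ln (real (a m)) / ln (real m))) + ereal (real n)
     \<le> limsup (\<lambda>N. ereal (ln (real (b N)) / ln (real N)))"
    (is "?Lf + _ \<le> ?LF")
proof (rule dense_le)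
  fix y assume y: "y < ?Lf + ereal (real n)"
  have Fpos: "0 \<le> ?LF"
    by (rule le_Limsup) (auto intro!: always_eventually divide_nonneg_nonneg ln_nat_nonneg)
  have Lfpos: "0 \<le> ?Lf"
    by (rule le_Limsup) (auto intro!: always_eventually divide_nonneg_nonneg ln_nat_nonneg)
  show "y \<le> ?LF"
  proof (cases "y \<le> 0")
    case True then show ?thesis using Fpos by simp
  next
    case False
    then have "y \<noteq> \<infinity>" using y by auto
    moreover have "y \<noteq> - \<infinity>" using False by auto
    ultimately obtain yr where yr: "y = ereal yr" by (cases y) auto
    have yr0: "0 < yr" using False yr by simp
    obtain z where z1: "yr - real n < z" and z2: "ereal z < ?Lf"
    proof (cases ?Lf)
      case (real l)
      then have "yr < l + real n" using y yr by simp
      then show ?thesis using real by (intro that[of "(yr - real n + l) / 2"]) auto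
    next
      case PInf then show ?thesis by (intro that[of "yr - real n + 1"]) auto
    next
      case MInf then show ?thesis using Lfpos by simp
    qed
    have zn: "0 < real n + z - yr" using z1 by simp
    define K where "K = yr * ln (real (n + 1)) / (real n + z - yr)"
    define M0 where "M0 = max 2 (nat \<lceil>exp K\<rceil>)"
    show ?thesis
      unfolding yr
    proof (rule le_limsup_of_freq)
      fix N0
      obtain m where m: "m \<ge> max N0 M0" and fm: "ereal z < ereal (ln (real (a m)) / ln (real m))"
        using freq_of_less_limsup[OF z2, of "max N0 M0"] by blast
      have m2: "2 \<le> m" using m by (simp add: M0_def)
      have lnm: "0 < ln (real m)" using m2 by simp
      have e1: "exp K \<le> real (nat \<lceil>exp K\<rceil>)" by linarith
      have "nat \<lceil>exp K\<rceil> \<le> m" using m unfolding M0_def by linarith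
      then have e2: "real (nat \<lceil>exp K\<rceil>) \<le> real m" by (simp only: of_nat_le_iff)
      have em: "exp K \<le> real m" using e1 e2 by linarith
      have "ln (exp K) \<le> ln (real m)" using em m2 by (subst ln_le_cancel_iff) auto
      then have Km: "K \<le> ln (real m)" by simp
      define N where "N = (n + 1) * m"
      have lnN: "ln (real N) = ln (real (n + 1)) + ln (real m)"
        unfolding N_def using m2 by (subst of_nat_mult, subst ln_mult) auto
      have lnNpos: "0 < ln (real N)" using lnN lnm ln_nat_nonneg[of "n + 1"] by linarith
      have a1m: "1 \<le> real (a m)" using a1[of m] by simp
      have za: "z * ln (real m) < ln (real (a m))" using fm lnm by (simp add: field_simps)
      have "real m ^ n * real (a m) \<le> real (b N)"
      proof -
        have "real m ^ n \<le> real (m + 1) ^ n" by (intro power_mono) auto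
        then have "real m ^ n * real (a m) \<le> real (m + 1) ^ n * real (a m)"
          using a1m by (intro mult_right_mono) auto
        also have "\<dots> \<le> real (b N)" using ab[of m] unfolding N_def
          by (metis of_nat_le_iff of_nat_mult of_nat_power)
        finally show ?thesis .
      qed
      moreover have "0 < real m ^ n * real (a m)" using m2 a1m by simp
      ultimately have "ln (real m ^ n * real (a m)) \<le> ln (real (b N))" by simp
      moreover have "ln (real m ^ n * real (a m)) = real n * ln (real m) + ln (real (a m))"
        using m2 a1m by (simp add: ln_mult ln_realpow)
      ultimately have lnB: "(real n + z) * ln (real m) < ln (real (b N))"
        using za by (simp add: algebra_simps)
      have "yr * ln (real N) \<le> (real n + z) * ln (real m)"
      proof -
        have "K * (real n + z - yr) = yr * ln (real (n + 1))" using zn by (simp add: K_def)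
        moreover have "K * (real n + z - yr) \<le> ln (real m) * (real n + z - yr)"
          using Km zn by (intro mult_right_mono) auto
        ultimately show ?thesis unfolding lnN by (simp add: algebra_simps)
      qed
      then have "yr * ln (real N) < ln (real (b N))" using lnB by simp
      then have "yr < ln (real (b N)) / ln (real N)" using lnNpos by (simp add: field_simps)
      moreover have "N \<ge> N0" using m unfolding N_def by (simp add: le_trans[OF _ mult_le_mono2])
      ultimately show "\<exists>N\<ge>N0. ereal yr < ereal (ln (real (b N)) / ln (real N))" by auto
    qed
  qed
qed

lemma poly_as_sum_lt:
  fixes q :: "int poly"
  assumes "degree q < n"
  shows "poly q x = (\<Sum>i<n. coeff q i * x ^ i)"
proof -
  have "poly q x = (\<Sum>i\<le>degree q. coeff q i * x ^ i)" by (rule poly_altdef)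
  also have "\<dots> = (\<Sum>i<n. coeff q i * x ^ i)"
    using assms by (intro sum.mono_neutral_left) (auto simp: coeff_eq_0)
  finally show ?thesis .
qed

lemma vandermonde:
  fixes N :: "nat \<Rightarrow> nat" and c :: "nat \<Rightarrow> int"
  assumes inj: "inj_on N {..<n}" and eq: "\<forall>i<n. (\<Sum>j<n. c j * int (N j) ^ i) = 0"
  shows "\<forall>j<n. c j = 0"
proof (intro allI impI)
  fix j0 assume j0: "j0 < n"
  define q where "q = (\<Prod>j\<in>{..<n} - {j0}. [:- int (N j), 1:])"
  have d1: "degree q \<le> sum (degree \<circ> (\<lambda>j. [:- int (N j), 1:])) ({..<n} - {j0})"
    unfolding q_def by (rule degree_prod_sum_le) simp
  have d2: "sum (degree \<circ> (\<lambda>j. [:- int (N j), 1:])) ({..<n} - {j0}) = card ({..<n} - {j0})"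
    by (simp add: comp_def)
  have "card ({..<n} - {j0}) < n" using j0 by simp
  then have dq: "degree q < n" using d1 d2 by linarith
  have "(\<Sum>j<n. c j * poly q (int (N j))) = (\<Sum>j<n. c j * (\<Sum>i<n. coeff q i * int (N j) ^ i))"
    using poly_as_sum_lt[OF dq] by simp
  also have "\<dots> = (\<Sum>j<n. \<Sum>i<n. coeff q i * (c j * int (N j) ^ i))"
    by (simp add: sum_distrib_left mult.left_commute)
  also have "\<dots> = (\<Sum>i<n. \<Sum>j<n. coeff q i * (c j * int (N j) ^ i))"
    by (rule sum.swap)
  also have "\<dots> = (\<Sum>i<n. coeff q i * (\<Sum>j<n. c j * int (N j) ^ i))"
    by (simp add: sum_distrib_left)
  also have "\<dots> = 0" using eq by simp
  finally have s: "(\<Sum>j<n. c j * poly q (int (N j))) = 0" .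
  have z: "poly q (int (N j)) = 0" if "j < n" "j \<noteq> j0" for j
  proof -
    have "j \<in> {..<n} - {j0}" using that by simp
    then show ?thesis unfolding q_def poly_prod
      by (intro prod_zero) (auto intro!: bexI[of _ j])
  qed
  have "(\<Sum>j<n. c j * poly q (int (N j))) = c j0 * poly q (int (N j0))"
    using j0 z by (subst sum.remove[of _ j0]) (auto intro!: sum.neutral)
  then have "c j0 * poly q (int (N j0)) = 0" using s by simp
  moreover have "poly q (int (N j0)) \<noteq> 0"
  proof -
    have ne: "\<And>j. j \<in> {..<n} - {j0} \<Longrightarrow> poly [:- int (N j), 1:] (int (N j0)) \<noteq> 0"
    proof -
      fix j assume jj: "j \<in> {..<n} - {j0}"
      then have "N j \<noteq> N j0" using inj j0 by (auto dest: inj_onD)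
      then show "poly [:- int (N j), 1:] (int (N j0)) \<noteq> 0" by simp
    qed
    show ?thesis unfolding q_def poly_prod
      by (metis (no_types, lifting) finite_Diff finite_lessThan ne prod_zero_iff)
  qed
  ultimately show "c j0 = 0" by simp
qed

lemma pigeonhole_fiber:
  fixes f :: "nat \<Rightarrow> 'g"
  assumes G: "finite G" and Gne: "G \<noteq> {}" and f: "\<forall>x<card G * n. f x \<in> G" and n: "0 < n"
  shows "\<exists>g\<in>G. n \<le> card {x. x < card G * n \<and> f x = g}"
proof (rule ccontr)
  assume "\<not> ?thesis"
  then have lt: "\<forall>g\<in>G. card {x. x < card G * n \<and> f x = g} \<le> n - 1" by auto
  have U: "{..<card G * n} = (\<Union>g\<in>G. {x. x < card G * n \<and> f x = g})" using f by auto
  have "card (\<Union>g\<in>G. {x. x < card G * n \<and> f x = g}) \<le> (\<Sum>g\<in>G. card {x. x < card G * n \<and> f x = g})"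
    by (rule card_UN_le[OF G])
  then have "card {..<card G * n} \<le> (\<Sum>g\<in>G. card {x. x < card G * n \<and> f x = g})"
    unfolding U .
  also have "\<dots> \<le> (\<Sum>g\<in>G. n - 1)" using lt by (intro sum_mono) auto
  also have "\<dots> = card G * (n - 1)" by simp
  finally have "card G * n \<le> card G * (n - 1)" by simp
  moreover have "card G > 0" using G Gne by (simp add: card_gt_0_iff)
  ultimately show False using n by simp
qed

definition smul :: "int \<Rightarrow> (nat \<Rightarrow> int) \<Rightarrow> (nat \<Rightarrow> int)" where
  "smul c a = (\<lambda>i. c * a i)"
definition vneg :: "(nat \<Rightarrow> int) \<Rightarrow> (nat \<Rightarrow> int)" where
  "vneg a = (\<lambda>i. - a i)"

lemma Zn_smul: "a \<in> Zn n \<Longrightarrow> smul c a \<in> Zn n" by (simp add: Zn_def smul_def)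
lemma Zn_vneg: "a \<in> Zn n \<Longrightarrow> vneg a \<in> Zn n" by (simp add: Zn_def vneg_def)
lemma Zn_lincomb: "(\<And>j. j \<in> J \<Longrightarrow> v j \<in> Zn n) \<Longrightarrow> (\<lambda>i. \<Sum>j\<in>J. c j * v j i) \<in> Zn n"
  by (auto simp: Zn_def intro!: sum.neutral)

definition zv0 :: "nat \<Rightarrow> int" where "zv0 = (\<lambda>_. 0)"

lemma additive_lincomb:
  assumes fZ: "\<And>a. a \<in> Zn n \<Longrightarrow> f a \<in> Zn n"
    and add: "\<And>a b. a \<in> Zn n \<Longrightarrow> b \<in> Zn n \<Longrightarrow> f (vadd a b) = vadd (f a) (f b)"
    and J: "finite J" and v: "\<And>j. j \<in> J \<Longrightarrow> v j \<in> Zn n"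
  shows "f (\<lambda>i. \<Sum>j\<in>J. c j * v j i) = (\<lambda>i. \<Sum>j\<in>J. c j * f (v j) i)"
proof -
  have zv0Z: "zv0 \<in> Zn n" by (simp add: zv0_def Zn_def)
  have f0: "f zv0 = zv0"
  proof -
    have "f zv0 = vadd (f zv0) (f zv0)" using add[OF zv0Z zv0Z] by (simp add: vadd_def zv0_def)
    then show ?thesis by (auto simp: vadd_def zv0_def fun_eq_iff)
  qed
  have fnat: "f (smul (int c) a) = smul (int c) (f a)" if a: "a \<in> Zn n" for c a
  proof (induction c)
    case 0
    have "smul (int 0) a = zv0" "smul (int 0) (f a) = zv0" by (auto simp: smul_def zv0_def)
    then show ?case using f0 by simp
  next
    case (Suc c)
    have "smul (int (Suc c)) a = vadd (smul (int c) a) a" by (auto simp: smul_def vadd_def algebra_simps)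
    moreover have "smul (int (Suc c)) (f a) = vadd (smul (int c) (f a)) (f a)"
      by (auto simp: smul_def vadd_def algebra_simps)
    ultimately show ?case using add[OF Zn_smul[OF a] a] Suc by simp
  qed
  have fneg: "f (vneg a) = vneg (f a)" if a: "a \<in> Zn n" for a
  proof -
    have "vadd (f a) (f (vneg a)) = f (vadd a (vneg a))" using add[OF a Zn_vneg[OF a]] by simp
    also have "vadd a (vneg a) = zv0" by (auto simp: vadd_def vneg_def zv0_def)
    finally have "vadd (f a) (f (vneg a)) = zv0" using f0 by simp
    then show ?thesis by (auto simp: vadd_def vneg_def zv0_def fun_eq_iff eq_neg_iff_add_eq_0 add.commute)
  qed
  have fint: "f (smul c a) = smul c (f a)" if a: "a \<in> Zn n" for c a
  proof (cases "0 \<le> c")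
    case True
    then show ?thesis using fnat[OF a, of "nat c"] by simp
  next
    case False
    have ic: "int (nat (- c)) = - c" using False by simp
    have e1: "smul c a = vneg (smul (int (nat (- c))) a)" unfolding ic by (auto simp: smul_def vneg_def)
    have e2: "smul c (f a) = vneg (smul (int (nat (- c))) (f a))" unfolding ic by (auto simp: smul_def vneg_def)
    show ?thesis unfolding e1 e2 fneg[OF Zn_smul[OF a]] fnat[OF a] ..
  qed
  show ?thesis
    using J v
  proof (induction J rule: finite_induct)
    case empty
    then show ?case using f0 by (simp add: zv0_def)
  next
    case (insert j J)
    have vj: "v j \<in> Zn n" using insert by auto
    have rest: "(\<lambda>i. \<Sum>j\<in>J. c j * v j i) \<in> Zn n" using insert by (intro Zn_lincomb) auto
    have "(\<lambda>i. \<Sum>j\<in>insert j J. c j * v j i) = vadd (smul (c j) (v j)) (\<lambda>i. \<Sum>j\<in>J. c j * v j i)"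
      using insert by (auto simp: vadd_def smul_def)
    then have "f (\<lambda>i. \<Sum>j\<in>insert j J. c j * v j i) = vadd (smul (c j) (f (v j))) (f (\<lambda>i. \<Sum>j\<in>J. c j * v j i))"
      using add[OF Zn_smul[OF vj] rest] fint[OF vj] by simp
    also have "\<dots> = (\<lambda>i. \<Sum>j\<in>insert j J. c j * f (v j) i)"
      using insert by (auto simp: vadd_def smul_def)
    finally show ?case .
  qed
qed

lemma skew_subring_sum:
  assumes R: "skew_subring R" and T: "finite T" and f: "\<And>t. t \<in> T \<Longrightarrow> f t \<in> R"
  shows "skew_sum f T \<in> R"
  using T f
proof (induction T rule: finite_induct)
  case empty
  have "skew_sum f {} = skew_zero" by (simp add: skew_sum_def skew_zero_def)
  then show ?case using R by (simp add: skew_subring_def)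
next
  case (insert x T)
  have "skew_sum f (insert x T) = skew_add (f x) (skew_sum f T)"
    using insert by (simp add: skew_sum_def skew_add_def)
  then show ?case using R insert by (simp add: skew_subring_def)
qed

lemma subring_prod: "is_subring R \<Longrightarrow> (\<And>i. i \<in> I \<Longrightarrow> f i \<in> R) \<Longrightarrow> prod f I \<in> R"
  by (induction I rule: infinite_finite_induct) (auto simp: is_subring_def)

locale gctx = skewM k M n \<phi> for k :: "'L::field_char_0 set" and M n \<phi> +
  fixes \<Gamma> :: "'L set" and G :: "('L \<Rightarrow> 'L) set" and U :: "'L skew set"
  assumes Gam: "is_subring \<Gamma>"
    and G_def: "G = Aut_over (frac_field \<Gamma>)"
    and G_fin: "finite G"
    and G_conj: "\<forall>g\<in>G. \<forall>m\<in>M. g \<circ> m \<circ> inv g \<in> M"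
    and U_ring: "skew_subring U"
    and U_Gam: "iota ` \<Gamma> \<subseteq> U"
    and U_sub: "U \<subseteq> skew_invariants M G"
    and KU: "left_span (frac_field \<Gamma>) U = skew_invariants M G"
begin

lemma G_aut: "g \<in> G \<Longrightarrow> field_aut g" by (simp add: G_def Aut_over_def)
lemma G_bij: "g \<in> G \<Longrightarrow> bij g" using G_aut aut_bij by blast

lemma G_id: "id \<in> G" by (simp add: G_def Aut_over_def field_aut_def)

lemma G_comp: "g \<in> G \<Longrightarrow> h \<in> G \<Longrightarrow> g \<circ> h \<in> G"
  by (auto simp: G_def Aut_over_def field_aut_def intro: bij_comp)

lemma G_inv: assumes g: "g \<in> G" shows "inv g \<in> G"
proof -
  have a: "field_aut g" and fx: "\<forall>x\<in>frac_field \<Gamma>. g x = x" using g by (auto simp: G_def Aut_over_def)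
  have b: "bij g" using a aut_bij by blast
  have i: "inj g" using b bij_is_inj by blast
  have gi: "g (inv g y) = y" for y using b by (simp add: bij_is_surj surj_f_inv_f)
  have "inv g (x + y) = inv g x + inv g y" for x y
    by (rule inv_f_eq[OF i]) (simp add: aut_add[OF a] gi)
  moreover have "inv g (x * y) = inv g x * inv g y" for x y
    by (rule inv_f_eq[OF i]) (simp add: aut_mult[OF a] gi)
  moreover have "inv g x = x" if "x \<in> frac_field \<Gamma>" for x
    using that fx by (intro inv_f_eq[OF i]) auto
  moreover have "bij (inv g)" using b by (rule bij_imp_bij_inv)
  ultimately show ?thesis by (simp add: G_def Aut_over_def field_aut_def)
qed

lemma G_inv_l: "g \<in> G \<Longrightarrow> inv g \<circ> g = id"
  using G_bij bij_is_inj inv_o_cancel by blast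
lemma G_inv_r: "g \<in> G \<Longrightarrow> g \<circ> inv g = id"
  using G_bij by (auto simp: fun_eq_iff bij_is_surj surj_f_inv_f)

definition Orb :: "('L \<Rightarrow> 'L) \<Rightarrow> ('L \<Rightarrow> 'L) set" where
  "Orb m = (\<lambda>g. g \<circ> m \<circ> inv g) ` G"

definition xo :: "('L \<Rightarrow> 'L) \<Rightarrow> 'L skew" where
  "xo m = (\<lambda>p. if p \<in> Orb m then 1 else 0)"

lemma Orb_self: "m \<in> Orb m"
  unfolding Orb_def using G_id by (auto intro!: image_eqI[of _ _ id])

lemma Orb_conj:
  assumes h: "h \<in> G"
  shows "inv h \<circ> p \<circ> h \<in> Orb m \<longleftrightarrow> p \<in> Orb m"
proof
  assume "inv h \<circ> p \<circ> h \<in> Orb m"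
  then obtain g where g: "g \<in> G" "inv h \<circ> p \<circ> h = g \<circ> m \<circ> inv g" by (auto simp: Orb_def)
  have "h \<circ> (inv h \<circ> p \<circ> h) \<circ> inv h = (h \<circ> inv h) \<circ> p \<circ> (h \<circ> inv h)" by (simp only: comp_assoc)
  then have "p = h \<circ> (inv h \<circ> p \<circ> h) \<circ> inv h" using G_inv_r[OF h] by simp
  also have "\<dots> = (h \<circ> g) \<circ> m \<circ> inv (h \<circ> g)"
    using g(2) o_inv_distrib[OF G_bij[OF h] G_bij[OF g(1)]] by (simp add: comp_assoc)
  finally show "p \<in> Orb m" using G_comp[OF h g(1)] by (auto simp: Orb_def)
next
  assume "p \<in> Orb m"
  then obtain g where g: "g \<in> G" "p = g \<circ> m \<circ> inv g" by (auto simp: Orb_def)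
  have ih: "inv h \<in> G" using G_inv[OF h] .
  have "inv h \<circ> p \<circ> h = (inv h \<circ> g) \<circ> m \<circ> inv (inv h \<circ> g)"
    using g(2) o_inv_distrib[OF G_bij[OF ih] G_bij[OF g(1)]] inv_inv_eq[OF G_bij[OF h]]
    by (simp add: comp_assoc)
  then show "inv h \<circ> p \<circ> h \<in> Orb m" using G_comp[OF ih g(1)] by (auto simp: Orb_def)
qed

lemma xo_invariant:
  assumes m: "m \<in> M"
  shows "xo m \<in> skew_invariants M G"
proof -
  have "ssupp (xo m) = Orb m" by (auto simp: ssupp_def xo_def)
  moreover have "Orb m \<subseteq> M" using G_conj m by (auto simp: Orb_def)
  moreover have "finite (Orb m)" using G_fin by (simp add: Orb_def)
  ultimately have c: "xo m \<in> skew_carrier M" by (simp add: skew_carrier_def)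
  have "skew_act h (xo m) = xo m" if h: "h \<in> G" for h
  proof
    fix p
    have "skew_act h (xo m) p = h (if inv h \<circ> p \<circ> h \<in> Orb m then 1 else 0)"
      by (simp add: skew_act_def xo_def)
    also have "\<dots> = (if p \<in> Orb m then 1 else 0)"
      using Orb_conj[OF h] aut_0[OF G_aut[OF h]] aut_1[OF G_aut[OF h]] by simp
    finally show "skew_act h (xo m) p = xo m p" by (simp add: xo_def)
  qed
  then show ?thesis using c by (simp add: skew_invariants_def)
qed

lemma clear_denominators:
  assumes x: "x \<in> left_span (frac_field \<Gamma>) U"
  shows "\<exists>b\<in>\<Gamma>. b \<noteq> 0 \<and> (\<lambda>p. b * x p) \<in> U"
proof -
  obtain T c where T: "finite T" "T \<subseteq> U" "c ` T \<subseteq> frac_field \<Gamma>"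
    and xe: "x = skew_sum (\<lambda>u. skew_mult (iota (c u)) u) T"
    using x unfolding left_span_def by blast
  have "\<forall>u\<in>T. \<exists>ad. fst ad \<in> \<Gamma> \<and> snd ad \<in> \<Gamma> \<and> snd ad \<noteq> 0 \<and> c u = fst ad / snd ad"
    using T(3) unfolding frac_field_def by force
  from bchoice[OF this] obtain AD where AD: "\<forall>u\<in>T. fst (AD u) \<in> \<Gamma> \<and> snd (AD u) \<in> \<Gamma> \<and> snd (AD u) \<noteq> 0 \<and> c u = fst (AD u) / snd (AD u)"
    by blast
  define b where "b = (\<Prod>u\<in>T. snd (AD u))"
  have bG: "b \<in> \<Gamma>" unfolding b_def using AD by (intro subring_prod[OF Gam]) auto
  have b0: "b \<noteq> 0" unfolding b_def using AD T(1) by auto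
  have bc: "b * c u \<in> \<Gamma>" if u: "u \<in> T" for u
  proof -
    have "b = snd (AD u) * (\<Prod>u'\<in>T - {u}. snd (AD u'))"
      unfolding b_def using T(1) u by (simp add: prod.remove)
    then have "b * c u = fst (AD u) * (\<Prod>u'\<in>T - {u}. snd (AD u'))"
      using AD u by (simp add: field_simps)
    moreover have "(\<Prod>u'\<in>T - {u}. snd (AD u')) \<in> \<Gamma>" using AD by (intro subring_prod[OF Gam]) auto
    ultimately show ?thesis using AD u Gam by (simp add: is_subring_def)
  qed
  have "(\<lambda>p. b * x p) = skew_sum (\<lambda>u. skew_mult (iota (b * c u)) u) T"
    unfolding xe by (simp add: skew_sum_def iota_mult sum_distrib_left mult.assoc)
  also have "\<dots> \<in> U"
  proof (rule skew_subring_sum[OF U_ring T(1)])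
    fix u assume u: "u \<in> T"
    have "iota (b * c u) \<in> U" using U_Gam bc[OF u] by auto
    then show "skew_mult (iota (b * c u)) u \<in> U" using U_ring u T(2) by (auto simp: skew_subring_def)
  qed
  finally show ?thesis using bG b0 by blast
qed

lemma U_carrier: "U \<subseteq> skew_carrier M"
  using U_sub by (auto simp: skew_invariants_def)

definition psi :: "('L \<Rightarrow> 'L) \<Rightarrow> (nat \<Rightarrow> int) \<Rightarrow> (nat \<Rightarrow> int)" where
  "psi g a = inv_into (Zn n) \<phi> (g \<circ> \<phi> a \<circ> inv g)"

lemma psi: assumes g: "g \<in> G" and a: "a \<in> Zn n"
  shows "psi g a \<in> Zn n" "\<phi> (psi g a) = g \<circ> \<phi> a \<circ> inv g"
proof -
  have mem: "g \<circ> \<phi> a \<circ> inv g \<in> \<phi> ` Zn n" using G_conj g \<phi>_in[OF a] \<phi>_img by auto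
  show "psi g a \<in> Zn n" unfolding psi_def by (rule inv_into_into[OF mem])
  show "\<phi> (psi g a) = g \<circ> \<phi> a \<circ> inv g" unfolding psi_def by (rule f_inv_into_f[OF mem])
qed

lemma psi_eq: "g \<in> G \<Longrightarrow> a \<in> Zn n \<Longrightarrow> s \<in> Zn n \<Longrightarrow> \<phi> s = g \<circ> \<phi> a \<circ> inv g \<Longrightarrow> s = psi g a"
  using psi[of g a] inj_onD[OF \<phi>_inj, of s "psi g a"] by auto

lemma psi_add: assumes g: "g \<in> G" and a: "a \<in> Zn n" and b: "b \<in> Zn n"
  shows "psi g (vadd a b) = vadd (psi g a) (psi g b)"
proof -
  have "\<phi> (vadd (psi g a) (psi g b)) = (g \<circ> \<phi> a \<circ> inv g) \<circ> (g \<circ> \<phi> b \<circ> inv g)"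
    using \<phi>_add psi[OF g a] psi[OF g b] by simp
  also have "\<dots> = g \<circ> (\<phi> a \<circ> (inv g \<circ> g) \<circ> \<phi> b) \<circ> inv g" by (simp add: comp_assoc)
  also have "\<dots> = g \<circ> \<phi> (vadd a b) \<circ> inv g" using G_inv_l[OF g] \<phi>_add[OF a b] by simp
  finally show ?thesis
    using psi_eq[OF g Zn_vadd[OF a b]] Zn_vadd psi[OF g a] psi[OF g b] by metis
qed

lemma psi_inj: assumes g: "g \<in> G" and a: "a \<in> Zn n" and b: "b \<in> Zn n" and eq: "psi g a = psi g b"
  shows "a = b"
proof -
  have e: "g \<circ> \<phi> a \<circ> inv g = g \<circ> \<phi> b \<circ> inv g" using psi[OF g a] psi[OF g b] eq by metis
  have ea: "inv g \<circ> (g \<circ> \<phi> a \<circ> inv g) \<circ> g = (inv g \<circ> g) \<circ> \<phi> a \<circ> (inv g \<circ> g)" by (simp only: comp_assoc)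
  have eb: "inv g \<circ> (g \<circ> \<phi> b \<circ> inv g) \<circ> g = (inv g \<circ> g) \<circ> \<phi> b \<circ> (inv g \<circ> g)" by (simp only: comp_assoc)
  have "\<phi> a = inv g \<circ> (g \<circ> \<phi> a \<circ> inv g) \<circ> g"
    using ea G_inv_l[OF g] by simp
  also have "\<dots> = inv g \<circ> (g \<circ> \<phi> b \<circ> inv g) \<circ> g" using e by simp
  also have "\<dots> = \<phi> b" using eb G_inv_l[OF g] by simp
  finally show ?thesis using \<phi>_inj a b by (auto dest: inj_onD)
qed

lemma y_exists:
  assumes w: "w \<in> Zn n"
  shows "\<exists>y s g. y \<in> U \<and> istop y s \<and> g \<in> G \<and> s = psi g w"
proof -
  have "xo (\<phi> w) \<in> left_span (frac_field \<Gamma>) U" using xo_invariant[OF \<phi>_in[OF w]] KU by simp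
  then obtain b where b: "b \<in> \<Gamma>" "b \<noteq> 0" and yU: "(\<lambda>p. b * xo (\<phi> w) p) \<in> U"
    using clear_denominators by blast
  define y where "y = (\<lambda>p. b * xo (\<phi> w) p)"
  have yc: "y \<in> skew_carrier M" using yU U_carrier by (auto simp: y_def)
  have "y (\<phi> w) \<noteq> 0" using b Orb_self by (simp add: y_def xo_def)
  then obtain s where s: "istop y s" using top_exists[OF yc] by blast
  then have "y (\<phi> s) \<noteq> 0" "s \<in> Zn n" by (auto simp: istop_def)
  then have "\<phi> s \<in> Orb (\<phi> w)" by (simp add: y_def xo_def split: if_splits)
  then obtain g where g: "g \<in> G" "\<phi> s = g \<circ> \<phi> w \<circ> inv g" by (auto simp: Orb_def)
  have "s = psi g w" using psi_eq[OF g(1) w \<open>s \<in> Zn n\<close> g(2)] .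
  then show ?thesis using yU s g(1) unfolding y_def by blast
qed

definition vw :: "nat \<Rightarrow> nat \<Rightarrow> int" where
  "vw N = (\<lambda>i. if i < n then int N ^ i else 0)"

lemma vw_Zn: "vw N \<in> Zn n" by (simp add: vw_def Zn_def)

lemma exists_indep_tops:
  "\<exists>u t. (\<forall>j<n. u j \<in> U \<and> istop (u j) (t j)) \<and>
     (\<forall>c::nat \<Rightarrow> int. (\<forall>i. (\<Sum>j<n. c j * t j i) = 0) \<longrightarrow> (\<forall>j<n. c j = 0))"
proof (cases "n = 0")
  case True then show ?thesis by auto
next
  case False
  then have n0: "0 < n" by simp
  have "\<forall>N. \<exists>ysg. fst ysg \<in> U \<and> istop (fst ysg) (fst (snd ysg)) \<and> snd (snd ysg) \<in> G \<and>
      fst (snd ysg) = psi (snd (snd ysg)) (vw N)"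
    using y_exists[OF vw_Zn] by fastforce
  then obtain YSG where YSG: "\<And>N. fst (YSG N) \<in> U \<and> istop (fst (YSG N)) (fst (snd (YSG N))) \<and>
      snd (snd (YSG N)) \<in> G \<and> fst (snd (YSG N)) = psi (snd (snd (YSG N))) (vw N)"
    by metis
  define Y where "Y N = fst (YSG N)" for N
  define S where "S N = fst (snd (YSG N))" for N
  define gg where "gg N = snd (snd (YSG N))" for N
  have Y: "Y N \<in> U" "istop (Y N) (S N)" "gg N \<in> G" "S N = psi (gg N) (vw N)" for N
    using YSG[of N] by (auto simp: Y_def S_def gg_def)
  obtain g where g: "g \<in> G" "n \<le> card {x. x < card G * n \<and> gg x = g}"
    using pigeonhole_fiber[OF G_fin _ _ n0, of gg] G_id Y(3) by blast
  obtain Fs where Fs: "Fs \<subseteq> {x. x < card G * n \<and> gg x = g}" "card Fs = n" "finite Fs"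
    using obtain_subset_with_card_n[OF g(2)] by blast
  obtain e where e: "bij_betw e {0..<n} Fs" using ex_bij_betw_nat_finite[OF Fs(3)] Fs(2) by blast
  have einj: "inj_on e {..<n}" using e by (simp add: bij_betw_def atLeast0LessThan)
  have eg: "gg (e j) = g" if "j < n" for j
  proof -
    have "e j \<in> Fs" using e that by (auto simp: bij_betw_def)
    then show ?thesis using Fs(1) by auto
  qed
  define u where "u j = Y (e j)" for j
  define t where "t j = S (e j)" for j
  have tpsi: "t j = psi g (vw (e j))" if "j < n" for j using Y(4)[of "e j"] eg[OF that] by (simp add: t_def)
  have indep: "\<forall>j<n. c j = 0" if c: "\<forall>i. (\<Sum>j<n. c j * t j i) = 0" for c :: "nat \<Rightarrow> int"
  proof -
    define W where "W = (\<lambda>i. \<Sum>j<n. c j * vw (e j) i)"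
    have WZ: "W \<in> Zn n" unfolding W_def by (rule Zn_lincomb) (rule vw_Zn)
    have "psi g W = (\<lambda>i. \<Sum>j<n. c j * psi g (vw (e j)) i)"
      unfolding W_def
      by (rule additive_lincomb) (auto intro: psi[OF g(1)] psi_add[OF g(1)] vw_Zn)
    also have "\<dots> = (\<lambda>i. \<Sum>j<n. c j * t j i)" by (auto intro!: sum.cong simp: tpsi)
    also have "\<dots> = zv" using c by (auto simp: zv_def)
    finally have pW: "psi g W = zv" .
    have "psi g zv = zv"
    proof -
      have "psi g zv = psi g (vadd zv zv)" by (simp add: vadd_def zv_def)
      also have "\<dots> = vadd (psi g zv) (psi g zv)" by (rule psi_add[OF g(1) zv_Zn zv_Zn])
      finally show ?thesis by (auto simp: vadd_def zv_def fun_eq_iff)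
    qed
    then have "W = zv" using psi_inj[OF g(1) WZ zv_Zn] pW by simp
    then have "\<forall>i<n. (\<Sum>j<n. c j * int (e j) ^ i) = 0"
    proof (intro allI impI)
      fix i assume i: "i < n"
      assume "W = zv"
      then have "W i = 0" by (simp add: zv_def)
      then show "(\<Sum>j<n. c j * int (e j) ^ i) = 0" using i by (simp add: W_def vw_def)
    qed
    then show ?thesis using vandermonde[OF einj] by blast
  qed
  show ?thesis
    using Y indep by (intro exI[of _ u] exI[of _ t]) (auto simp: u_def t_def)
qed

end

lemma ring_gen_subring: "is_subring (ring_gen A)"
  unfolding ring_gen_def is_subring_def by auto

lemma ring_gen_sub: "A \<subseteq> ring_gen A"
  unfolding ring_gen_def by auto

lemma skew_ring_gen_subring: "skew_subring (skew_ring_gen A)"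
  unfolding skew_ring_gen_def skew_subring_def by auto

theorem proposition5p5:
  fixes k \<Gamma> :: "'L::field_char_0 set"
    and M G :: "('L \<Rightarrow> 'L) set"
    and U :: "'L skew set"
    and n :: nat
  assumes k_field: "alg_closed_subfield k"
    and Gamma: "fg_k_domain k \<Gamma>"
    and Galois: "finite_galois_over (frac_field \<Gamma>)"
    and G_def: "G = Aut_over (frac_field \<Gamma>)"
    and M_sub: "M \<subseteq> Aut_over k"
    and M_monoid: "id \<in> M" "\<forall>m\<in>M. \<forall>m'\<in>M. m \<circ> m' \<in> M"
    and M_sep: "\<forall>m\<in>M. \<forall>m'\<in>M. (\<forall>x\<in>frac_field \<Gamma>. m x = m' x) \<longrightarrow> m = m'"
    and G_conj: "\<forall>g\<in>G. \<forall>m\<in>M. g \<circ> m \<circ> inv g \<in> M"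
    and M_Zn: "monoid_iso_Zn M n"
    and U_Gamma: "iota ` \<Gamma> \<subseteq> U"
    and U_fg: "\<exists>S. finite S \<and> S \<subseteq> U \<and> U = skew_ring_gen (iota ` \<Gamma> \<union> S)"
    and U_sub: "U \<subseteq> skew_invariants M G"
    and KU: "left_span (frac_field \<Gamma>) U = skew_invariants M G"
    and UK: "right_span (frac_field \<Gamma>) U = skew_invariants M G"
  shows "GKdim k U \<ge> GKdim k (iota ` \<Gamma>) + ereal (real n)"
proof -
  obtain \<phi> where \<phi>: "bij_betw \<phi> (Zn n) M" "\<forall>a\<in>Zn n. \<forall>b\<in>Zn n. \<phi> (\<lambda>i. a i + b i) = \<phi> a \<circ> \<phi> b"
    using M_Zn unfolding monoid_iso_Zn_def by blast
  have F: "is_subfield k" using k_field by (simp add: alg_closed_subfield_def)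
  have sk: "skewM k M n \<phi>"
    by unfold_locales (use M_sub M_monoid \<phi> in auto)
  have Gam: "is_subring \<Gamma>"
    using Gamma ring_gen_subring unfolding fg_k_domain_def by metis
  have Uring: "skew_subring U" using U_fg skew_ring_gen_subring by metis
  have Gfin: "finite G" unfolding G_def by (rule aut_finite[OF Galois])
  have gc: "gctx k M n \<phi> \<Gamma> G U"
    by (intro gctx.intro sk gctx_axioms.intro Gam G_def Gfin G_conj Uring U_Gamma U_sub KU)
  interpret g: gctx k M n \<phi> \<Gamma> G U by (rule gc)
  obtain u t where ut: "\<forall>j<n. u j \<in> U \<and> g.istop (u j) (t j)"
    and ind: "\<forall>c::nat \<Rightarrow> int. (\<forall>i. (\<Sum>j<n. c j * t j i) = 0) \<longrightarrow> (\<forall>j<n. c j = 0)"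
    using g.exists_indep_tops by blast
  define VG where "VG = {V. (\<exists>S. finite S \<and> S \<subseteq> iota ` \<Gamma> \<and> V = kspan k S) \<and> skew_one \<in> V}"
  define VU where "VU = {V. (\<exists>S. finite S \<and> S \<subseteq> U \<and> V = kspan k S) \<and> skew_one \<in> V}"
  define lsf where "lsf V = limsup (\<lambda>m. ereal (ln (real (kdim k (kspan k (vprods V m)))) / ln (real m)))"
    for V :: "'L skew set"
  have GKU: "GKdim k U = (SUP V\<in>VU. lsf V)" by (simp add: GKdim_def VU_def lsf_def)
  have GKG: "GKdim k (iota ` \<Gamma>) = (SUP V\<in>VG. lsf V)" by (simp add: GKdim_def VG_def lsf_def)
  have Uc: "U \<subseteq> skew_carrier M" using g.U_carrier .
  have key: "lsf V0 + ereal (real n) \<le> GKdim k U" if V0: "V0 \<in> VG" for V0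
  proof -
    obtain S0 where S0: "finite S0" "S0 \<subseteq> iota ` \<Gamma>" "V0 = kspan k S0" and one0: "skew_one \<in> V0"
      using V0 unfolding VG_def by blast
    define S where "S = S0 \<union> u ` {..<n}"
    have SU: "S \<subseteq> U" using S0(2) U_Gamma ut by (auto simp: S_def)
    have Sf: "finite S" using S0(1) by (simp add: S_def)
    define V where "V = kspan k S"
    have oneV: "skew_one \<in> V" using one0 lspan_mono[of S0 S k] by (auto simp: V_def S0(3) kspan_eq S_def)
    have VVU: "V \<in> VU" using SU Sf oneV unfolding VU_def V_def by blast
    have S0scal: "\<And>x. x \<in> S0 \<Longrightarrow> scal x" using S0(2) iota_scal by auto
    have S0c: "S0 \<subseteq> skew_carrier M" using S0(2) U_Gamma Uc by auto
    have gr: "(m + 1) ^ n * kdim k (kspan k (vprods V0 m)) \<le> kdim k (kspan k (vprods V ((n + 1) * m)))" for m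
      unfolding S0(3) V_def
      by (rule g.growth[OF F S0(1) S0scal one0[unfolded S0(3)] Sf _ _ _ _ ind])
         (use SU Uc ut in \<open>auto simp: S_def\<close>)
    have a1: "1 \<le> kdim k (kspan k (vprods V0 m))" for m
    proof -
      have eq: "kspan k (vprods V0 m) = kspan k (vprods S0 m)"
        unfolding S0(3) by (rule g.kspan_vprods_eq[OF F S0(1) S0c])
      have "skew_one \<in> vprods V0 m" using g.vprods_one one0 by blast
      then have "skew_one \<in> kspan k (vprods V0 m)" using lspan_sub[OF F] by (auto simp: kspan_eq)
      moreover have "skew_one id \<noteq> 0" by (simp add: skew_one_def iota_def)
      ultimately show ?thesis using kdim_pos[OF F vprods_finite[OF S0(1)] eq] by blast
    qed
    have "lsf V0 + ereal (real n) \<le> lsf V"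
      unfolding lsf_def by (rule limsup_growth[OF a1 gr])
    also have "\<dots> \<le> GKdim k U" unfolding GKU using VVU by (rule SUP_upper)
    finally show ?thesis .
  qed
  have VGne: "VG \<noteq> {}"
  proof -
    have "1 \<in> \<Gamma>" using Gam by (simp add: is_subring_def)
    then have "kspan k {skew_one} \<in> VG"
      unfolding VG_def using lspan_sub[OF F, of "{skew_one}"]
      by (auto simp: kspan_eq skew_one_def)
    then show ?thesis by blast
  qed
  have "(SUP V\<in>VG. lsf V) + ereal (real n) = (SUP V\<in>VG. lsf V + ereal (real n))"
    using SUP_ereal_add_left[OF VGne, of "ereal (real n)" lsf] by simp
  also have "\<dots> \<le> GKdim k U" using key by (rule SUP_least)
  finally show ?thesis unfolding GKG .
qed

end
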